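(* Let $v=(x,y,z)^T\in\mathbb{O}^3$ with $\operatorname{Re}(x)=\operatorname{Re}(y)=\operatorname{Re}(z)=0$ and associator $[v]:=[x,y,z]\neq0$. Then the set of $3\times3$ Hermitian octonionic matrices $A$ satisfying $Av=v[v]$ is nonempty and forms a 6-parameter family: identifying such $A$ with $(p,m,n,a,b,c)\in\mathbb{R}^3\times\mathbb{O}^3\cong\mathbb{R}^{27}$, the solution set is a real affine subspace of dimension $6$. Specifically, in a basis where $x=x_2 i$, $y=y_2 i+y_3 j$, $z=z_2 i+z_3 j+z_4 k+z_8\ell$, the diagonal entries $p,m,n$ and the components $b_1,b_4,b_7$ of $b$ (coefficients of $1,k,i\ell$) may be chosen freely, and the remaining entries of $A$ are then uniquely determined.
   Context: $\mathbb{O}$ denotes the real octonions, constructed by Cayley–Dickson as $\mathbb{H}\oplus\mathbb{H}\ell$ with basis $1,i,j,k,k\ell,j\ell,i\ell,\ell$; octonions are written $w=w_1+w_2 i+w_3 j+w_4 k+w_5 k\ell+w_6 j\ell+w_7 i\ell+w_8\ell$, and $\operatorname{Re}(w)=w_1$. The associator is $[x,y,z]=(xy)z-x(yz)$. Any triple of octonions can be put in the "generic" form $x=x_1+x_2 i$, $y=y_1+y_2 i+y_3 j$, $z=z_1+z_2 i+z_3 j+z_4 k+z_8\ell$ by a suitable choice of basis; then $[x,y,z]=2x_2y_3z_8\,k\ell$. A $3\times3$ Hermitian octonionic matrix has the form $A=\begin{pmatrix} p & a & \bar c\\ \bar a & m & b\\ c & \bar b & n\end{pmatrix}$ with $p,m,n\in\mathbb{R}$,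 $a,b,c\in\mathbb{O}$. $Av=v[v]$ means $px+ay+\bar c z = x[v]$, $\bar a x+my+bz=y[v]$, $cx+\bar b y+nz=z[v]$ (octonionic products). *)

theory Defs
  imports "HOL-Analysis.Analysis"
begin

text \<open>Basis labels of the octonions, in the order 1,i,j,k,kl,jl,il,l
  (coordinates w1,...,w8 of the paper).\<close>
datatype ob = E1 | Ei | Ej | Ek | Ekl | Ejl | Eil | El

lemma UNIV_ob: "(UNIV :: ob set) = {E1, Ei, Ej, Ek, Ekl, Ejl, Eil, El}"
  by (auto intro: ob.exhaust)

instance ob :: finite
  by standard (simp add: UNIV_ob)

type_synonym oct = "real ^ ob"

datatype quat = Q real real real real

fun qmul :: "quat \<Rightarrow> quat \<Rightarrow> quat" where
  "qmul (Q a1 a2 a3 a4) (Q b1 b2 b3 b4) =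
     Q (a1*b1 - a2*b2 - a3*b3 - a4*b4)
       (a1*b2 + a2*b1 + a3*b4 - a4*b3)
       (a1*b3 - a2*b4 + a3*b1 + a4*b2)
       (a1*b4 + a2*b3 - a3*b2 + a4*b1)"

fun qadd :: "quat \<Rightarrow> quat \<Rightarrow> quat" where
  "qadd (Q a1 a2 a3 a4) (Q b1 b2 b3 b4) = Q (a1+b1) (a2+b2) (a3+b3) (a4+b4)"

fun qsub :: "quat \<Rightarrow> quat \<Rightarrow> quat" where
  "qsub (Q a1 a2 a3 a4) (Q b1 b2 b3 b4) = Q (a1-b1) (a2-b2) (a3-b3) (a4-b4)"

fun qcnj :: "quat \<Rightarrow> quat" where
  "qcnj (Q a1 a2 a3 a4) = Q a1 (-a2) (-a3) (-a4)"

text \<open>w = q1 + q2 l with q1 = w1 + w2 i + w3 j + w4 k and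
  q2 = w8 + w7 i + w6 j + w5 k (so that q2 l has kl-coefficient w5, jl w6, il w7, l w8).\<close>
definition ohead :: "oct \<Rightarrow> quat" where
  "ohead w = Q (w $ E1) (w $ Ei) (w $ Ej) (w $ Ek)"

definition otail :: "oct \<Rightarrow> quat" where
  "otail w = Q (w $ El) (w $ Eil) (w $ Ejl) (w $ Ekl)"

fun ojoin :: "quat \<Rightarrow> quat \<Rightarrow> oct" where
  "ojoin (Q a1 a2 a3 a4) (Q b1 b2 b3 b4) =
     (\<chi> e. case e of E1 \<Rightarrow> a1 | Ei \<Rightarrow> a2 | Ej \<Rightarrow> a3 | Ek \<Rightarrow> a4
                   | El \<Rightarrow> b1 | Eil \<Rightarrow> b2 | Ejl \<Rightarrow> b3 | Ekl \<Rightarrow> b4)"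

text \<open>Cayley-Dickson product (a + b l)(c + d l) = (ac - conj(d) b) + (da + b conj(c)) l.
  With this convention [i,j,l] = 2 kl, matching the paper's formula.\<close>
definition omul :: "oct \<Rightarrow> oct \<Rightarrow> oct" where
  "omul x y = ojoin
     (qsub (qmul (ohead x) (ohead y)) (qmul (qcnj (otail y)) (otail x)))
     (qadd (qmul (otail y) (ohead x)) (qmul (otail x) (qcnj (ohead y))))"

definition ocnj :: "oct \<Rightarrow> oct" where
  "ocnj w = (\<chi> e. if e = E1 then w $ E1 else - (w $ e))"

definition ore :: "oct \<Rightarrow> real" where
  "ore w = w $ E1"

definition assoc :: "oct \<Rightarrow> oct \<Rightarrow> oct \<Rightarrow> oct" where
  "assoc x y z = omul (omul x y) z - omul x (omul y z)"

text \<open>A Hermitian matrix [[p,a,conj c],[conj a,m,b],[c,conj b,n]] is identified with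
  (p,m,n,a,b,c) in R^3 x O^3 (= R^27).  The equation A v = v [v] for v = (x,y,z).\<close>
definition eigen_eq :: "real \<times> real \<times> real \<times> oct \<times> oct \<times> oct \<Rightarrow> oct \<Rightarrow> oct \<Rightarrow> oct \<Rightarrow> bool" where
  "eigen_eq A x y z = (case A of (p, m, n, a, b, c) \<Rightarrow>
      (let r = assoc x y z in
        p *\<^sub>R x + omul a y + omul (ocnj c) z = omul x r \<and>
        omul (ocnj a) x + m *\<^sub>R y + omul b z = omul y r \<and>
        omul c x + omul (ocnj b) y + n *\<^sub>R z = omul z r))"

definition hsol :: "oct \<Rightarrow> oct \<Rightarrow> oct \<Rightarrow> (real \<times> real \<times> real \<times> oct \<times> oct \<times> oct) set" where
  "hsol x y z = {A. eigen_eq A x y z}"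

end

theory Submission
  imports Defs
begin


lemma all_ob: "(\<forall>e::ob. P e) \<longleftrightarrow> P E1 \<and> P Ei \<and> P Ej \<and> P Ek \<and> P Ekl \<and> P Ejl \<and> P Eil \<and> P El"
  by (metis ob.exhaust)

lemma oct_eq_iff: "(u::oct) = v \<longleftrightarrow> u$E1 = v$E1 \<and> u$Ei = v$Ei \<and> u$Ej = v$Ej \<and> u$Ek = v$Ek \<and>
   u$Ekl = v$Ekl \<and> u$Ejl = v$Ejl \<and> u$Eil = v$Eil \<and> u$El = v$El"
  by (simp add: vec_eq_iff all_ob)

lemma ojoin_comp:
  "ojoin (Q a1 a2 a3 a4) (Q b1 b2 b3 b4) $ E1 = a1"
  "ojoin (Q a1 a2 a3 a4) (Q b1 b2 b3 b4) $ Ei = a2"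
  "ojoin (Q a1 a2 a3 a4) (Q b1 b2 b3 b4) $ Ej = a3"
  "ojoin (Q a1 a2 a3 a4) (Q b1 b2 b3 b4) $ Ek = a4"
  "ojoin (Q a1 a2 a3 a4) (Q b1 b2 b3 b4) $ El = b1"
  "ojoin (Q a1 a2 a3 a4) (Q b1 b2 b3 b4) $ Eil = b2"
  "ojoin (Q a1 a2 a3 a4) (Q b1 b2 b3 b4) $ Ejl = b3"
  "ojoin (Q a1 a2 a3 a4) (Q b1 b2 b3 b4) $ Ekl = b4"
  by simp_all

lemma omul_comp:
  "omul x y $ E1 = x$E1*y$E1 - x$Ei*y$Ei - x$Eil*y$Eil - x$Ej*y$Ej - x$Ejl*y$Ejl - x$Ek*y$Ek - x$Ekl*y$Ekl - x$El*y$El"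
  "omul x y $ Ei = x$E1*y$Ei + x$Ei*y$E1 - x$Eil*y$El + x$Ej*y$Ek - x$Ejl*y$Ekl - x$Ek*y$Ej + x$Ekl*y$Ejl + x$El*y$Eil"
  "omul x y $ Ej = x$E1*y$Ej - x$Ei*y$Ek + x$Eil*y$Ekl + x$Ej*y$E1 - x$Ejl*y$El + x$Ek*y$Ei - x$Ekl*y$Eil + x$El*y$Ejl"
  "omul x y $ Ek = x$E1*y$Ek + x$Ei*y$Ej - x$Eil*y$Ejl - x$Ej*y$Ei + x$Ejl*y$Eil + x$Ek*y$E1 - x$Ekl*y$El + x$El*y$Ekl"
  "omul x y $ Ekl = x$E1*y$Ekl - x$Ei*y$Ejl - x$Eil*y$Ej + x$Ej*y$Eil + x$Ejl*y$Ei + x$Ek*y$El + x$Ekl*y$E1 - x$El*y$Ek"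
  "omul x y $ Ejl = x$E1*y$Ejl + x$Ei*y$Ekl + x$Eil*y$Ek + x$Ej*y$El + x$Ejl*y$E1 - x$Ek*y$Eil - x$Ekl*y$Ei - x$El*y$Ej"
  "omul x y $ Eil = x$E1*y$Eil + x$Ei*y$El + x$Eil*y$E1 - x$Ej*y$Ekl - x$Ejl*y$Ek + x$Ek*y$Ejl + x$Ekl*y$Ej - x$El*y$Ei"
  "omul x y $ El = x$E1*y$El - x$Ei*y$Eil + x$Eil*y$Ei - x$Ej*y$Ejl + x$Ejl*y$Ej - x$Ek*y$Ekl + x$Ekl*y$Ek + x$El*y$E1"
  by (simp_all add: omul_def ohead_def otail_def algebra_simps)

lemma ocnj_comp:
  "ocnj w $ E1 = w $ E1" "ocnj w $ Ei = - w $ Ei" "ocnj w $ Ej = - w $ Ej" "ocnj w $ Ek = - w $ Ek"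
  "ocnj w $ Ekl = - w $ Ekl" "ocnj w $ Ejl = - w $ Ejl" "ocnj w $ Eil = - w $ Eil" "ocnj w $ El = - w $ El"
  by (simp_all add: ocnj_def)

lemma omul_add_left: "omul (a + b) c = omul a c + omul b c"
  by (simp add: oct_eq_iff omul_comp algebra_simps)
lemma omul_add_right: "omul c (a + b) = omul c a + omul c b"
  by (simp add: oct_eq_iff omul_comp algebra_simps)
lemma omul_scaleR_left: "omul (r *\<^sub>R a) c = r *\<^sub>R omul a c"
  by (simp add: oct_eq_iff omul_comp algebra_simps)
lemma omul_scaleR_right: "omul c (r *\<^sub>R a) = r *\<^sub>R omul c a"
  by (simp add: oct_eq_iff omul_comp algebra_simps)
lemma ocnj_add: "ocnj (a + b) = ocnj a + ocnj b"
  by (simp add: oct_eq_iff ocnj_comp algebra_simps)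
lemma ocnj_scaleR: "ocnj (r *\<^sub>R a) = r *\<^sub>R ocnj a"
  by (simp add: oct_eq_iff ocnj_comp algebra_simps)

lemma affine_hsol: "affine (hsol x y z)"
  unfolding affine_def hsol_def
proof (intro ballI allI impI)
  fix A B :: "real \<times> real \<times> real \<times> oct \<times> oct \<times> oct" and u v :: real
  assume A: "A \<in> {A. eigen_eq A x y z}" and B: "B \<in> {A. eigen_eq A x y z}" and uv: "u + v = 1"
  obtain p1 m1 n1 a1 b1 c1 where Ad: "A = (p1,m1,n1,a1,b1,c1)" by (cases A) auto
  obtain p2 m2 n2 a2 b2 c2 where Bd: "B = (p2,m2,n2,a2,b2,c2)" by (cases B) auto
  define r where "r = assoc x y z"
  from A B have e1: "p1 *\<^sub>R x + omul a1 y + omul (ocnj c1) z = omul x r"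
    "omul (ocnj a1) x + m1 *\<^sub>R y + omul b1 z = omul y r"
    "omul c1 x + omul (ocnj b1) y + n1 *\<^sub>R z = omul z r"
   and e2: "p2 *\<^sub>R x + omul a2 y + omul (ocnj c2) z = omul x r"
    "omul (ocnj a2) x + m2 *\<^sub>R y + omul b2 z = omul y r"
    "omul c2 x + omul (ocnj b2) y + n2 *\<^sub>R z = omul z r"
    by (auto simp: Ad Bd eigen_eq_def r_def Let_def)
  have "(u * p1 + v * p2) *\<^sub>R x + omul (u *\<^sub>R a1 + v *\<^sub>R a2) y + omul (ocnj (u *\<^sub>R c1 + v *\<^sub>R c2)) z
     = u *\<^sub>R (p1 *\<^sub>R x + omul a1 y + omul (ocnj c1) z) + v *\<^sub>R (p2 *\<^sub>R x + omul a2 y + omul (ocnj c2) z)"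
    by (simp add: omul_add_left omul_scaleR_left ocnj_add ocnj_scaleR algebra_simps)
  also have "\<dots> = omul x r" using e1 e2 uv by (simp add: scaleR_add_left[symmetric])
  finally have f1: "(u * p1 + v * p2) *\<^sub>R x + omul (u *\<^sub>R a1 + v *\<^sub>R a2) y + omul (ocnj (u *\<^sub>R c1 + v *\<^sub>R c2)) z = omul x r" .
  have "omul (ocnj (u *\<^sub>R a1 + v *\<^sub>R a2)) x + (u * m1 + v * m2) *\<^sub>R y + omul (u *\<^sub>R b1 + v *\<^sub>R b2) z
     = u *\<^sub>R (omul (ocnj a1) x + m1 *\<^sub>R y + omul b1 z) + v *\<^sub>R (omul (ocnj a2) x + m2 *\<^sub>R y + omul b2 z)"
    by (simp add: omul_add_left omul_scaleR_left ocnj_add ocnj_scaleR algebra_simps)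
  also have "\<dots> = omul y r" using e1 e2 uv by (simp add: scaleR_add_left[symmetric])
  finally have f2: "omul (ocnj (u *\<^sub>R a1 + v *\<^sub>R a2)) x + (u * m1 + v * m2) *\<^sub>R y + omul (u *\<^sub>R b1 + v *\<^sub>R b2) z = omul y r" .
  have "omul (u *\<^sub>R c1 + v *\<^sub>R c2) x + omul (ocnj (u *\<^sub>R b1 + v *\<^sub>R b2)) y + (u * n1 + v * n2) *\<^sub>R z
     = u *\<^sub>R (omul c1 x + omul (ocnj b1) y + n1 *\<^sub>R z) + v *\<^sub>R (omul c2 x + omul (ocnj b2) y + n2 *\<^sub>R z)"
    by (simp add: omul_add_left omul_scaleR_left ocnj_add ocnj_scaleR algebra_simps)
  also have "\<dots> = omul z r" using e1 e2 uv by (simp add: scaleR_add_left[symmetric])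
  finally have f3: "omul (u *\<^sub>R c1 + v *\<^sub>R c2) x + omul (ocnj (u *\<^sub>R b1 + v *\<^sub>R b2)) y + (u * n1 + v * n2) *\<^sub>R z = omul z r" .
  show "u *\<^sub>R A + v *\<^sub>R B \<in> {A. eigen_eq A x y z}"
    using f1 f2 f3 by (simp add: Ad Bd eigen_eq_def r_def Let_def algebra_simps)
qed


definition "genf x y z \<longleftrightarrow> (\<forall>e. e \<noteq> Ei \<longrightarrow> x $ e = 0) \<and>
     (\<forall>e. e \<notin> {Ei, Ej} \<longrightarrow> y $ e = 0) \<and>
     (\<forall>e. e \<notin> {Ei, Ej, Ek, El} \<longrightarrow> z $ e = 0)"

lemma genf_D: assumes "genf x y z"
  shows "x$E1 = 0" "x$Ej = 0" "x$Ek = 0" "x$Ekl = 0" "x$Ejl = 0" "x$Eil = 0" "x$El = 0"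
   "y$E1 = 0" "y$Ek = 0" "y$Ekl = 0" "y$Ejl = 0" "y$Eil = 0" "y$El = 0"
   "z$E1 = 0" "z$Ekl = 0" "z$Ejl = 0" "z$Eil = 0"
  using assms unfolding genf_def by auto

lemma assoc_gen: assumes "genf x y z"
  shows "assoc x y z = (\<chi> e. if e = Ekl then 2 * x$Ei * y$Ej * z$El else 0)"
  using genf_D[OF assms] by (simp add: oct_eq_iff assoc_def omul_comp algebra_simps)


lemma J_ids:
  fixes x2 y2 y3 z2 z3 z4 z8 p m n a1 a2 a3 a4 a5 a6 a7 a8 b1 b2 b3 b4 b5 b6 b7 b8 c1 c2 c3 c4 c5 c6 c7 c8 Q R :: real
  assumes nz: "x2 \<noteq> 0" "y3 \<noteq> 0" "z8 \<noteq> 0"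
    and hQ: "Q = x2*(y2^2+z2^2+x2^2-z3^2-z4^2-z8^2-y3^2)"
    and hR: "R = -2*b1*y2*z2 - 2*b1*y3*z3 - 2*(2*x2*(y2*y3+z2*z3) - b7*z4/z8)*y2*z4 + 2*b4*y2*z3 - 2*b4*y3*z2 + 2*b7*y2*z8 - m*y2^2 - m*y3^2 - n*(z2^2+z3^2+z4^2+z8^2) + p*x2^2"
  shows "- 2*b5*y3*z8 = -2*y3*z8*b5"
    "0 = 0"
    "2*b8*y3*z8 - 4*x2*y3*z2*z8^2 = 2*y3*z8*(b8 - (2*x2*z2*z8))"
    "- 2*b5*y3*z4 = -2*y3*z4*b5"
    "2*b2*y3*z8 - 2*b6*y3*z4 - 2*x2*y2^2*y3*z8 - 2*x2*y3*z2^2*z8 + 2*x2*y3*z3^2*z8 + 2*x2*y3*z4^2*z8 + 2*x2*y3*z8^3 + 2*x2*y3^3*z8 - 2*x2^3*y3*z8 = 2*y3*(z8*b2 - z4*b6 - z8*Q)"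
    "- 2*b3*y3*z8 - 2*b7*y3*z4 + 4*x2*y2*y3^2*z8 + 4*x2*y3*z2*z3*z8 = -2*y3*z8*(b3 - (2*x2*(y2*y3+z2*z3) - b7*z4/z8))"
    "- 2*b8*y3*z4 + 4*x2*y3*z2*z4*z8 = -2*y3*z4*(b8 - (2*x2*z2*z8))"
    "- 2*b1*y2*z2 - 2*b1*y3*z3 + 2*b2*y3*z4 - 2*(2*x2*(y2*y3+z2*z3) - b7*z4/z8)*y2*z4 + 2*b4*y2*z3 - 2*b4*y3*z2 + 2*b6*y3*z8 + 2*b7*y2*z8 - m*y2^2 - m*y3^2 - n*z2^2 - n*z3^2 - n*z4^2 - n*z8^2 + p*x2^2 = 2*y3*z4*b2 + 2*y3*z8*b6 + R"
  using nz unfolding hQ hR by (simp_all add: field_simps power2_eq_square power3_eq_cube)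

lemma gen_real:
  fixes x2 y2 y3 z2 z3 z4 z8 p m n a1 a2 a3 a4 a5 a6 a7 a8 b1 b2 b3 b4 b5 b6 b7 b8 c1 c2 c3 c4 c5 c6 c7 c8 Q R :: real
  assumes nz: "x2 \<noteq> 0" "y3 \<noteq> 0" "z8 \<noteq> 0"
    and hQ: "Q = x2*(y2^2+z2^2+x2^2-z3^2-z4^2-z8^2-y3^2)"
    and hR: "R = -2*b1*y2*z2 - 2*b1*y3*z3 - 2*(2*x2*(y2*y3+z2*z3) - b7*z4/z8)*y2*z4 + 2*b4*y2*z3 - 2*b4*y3*z2 + 2*b7*y2*z8 - m*y2^2 - m*y3^2 - n*(z2^2+z3^2+z4^2+z8^2) + p*x2^2"
  shows "((- a2*y2 - a3*y3 + c2*z2 + c3*z3 + c4*z4 + c8*z8 = 0) \<and>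
    (a1*y2 - a4*y3 + c1*z2 - c3*z4 + c4*z3 + c7*z8 + p*x2 = 0) \<and>
    (a1*y3 + a4*y2 + c1*z3 + c2*z4 - c4*z2 + c6*z8 = 0) \<and>
    (a2*y3 - a3*y2 + c1*z4 - c2*z3 + c3*z2 + c5*z8 = 0) \<and>
    (a6*y2 - a7*y3 - c4*z8 - c6*z2 + c7*z3 + c8*z4 = 0) \<and>
    (- a5*y2 - a8*y3 - c3*z8 + c5*z2 - c7*z4 + c8*z3 = 2*x2^2*y3*z8) \<and>
    (a5*y3 - a8*y2 - c2*z8 - c5*z3 + c6*z4 + c8*z2 = 0) \<and>
    (a6*y3 + a7*y2 + c1*z8 - c5*z4 - c6*z3 - c7*z2 = 0) \<and>
    (a2*x2 - b2*z2 - b3*z3 - b4*z4 - b8*z8 = 0) \<and>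
    (a1*x2 + b1*z2 + b3*z4 - b4*z3 - b7*z8 + m*y2 = 0) \<and>
    (- a4*x2 + b1*z3 - b2*z4 + b4*z2 - b6*z8 + m*y3 = 0) \<and>
    (a3*x2 + b1*z4 + b2*z3 - b3*z2 - b5*z8 = 0) \<and>
    (- a6*x2 + b4*z8 + b6*z2 - b7*z3 - b8*z4 = 0) \<and>
    (a5*x2 + b3*z8 - b5*z2 + b7*z4 - b8*z3 = 2*x2*y2*y3*z8) \<and>
    (a8*x2 + b2*z8 + b5*z3 - b6*z4 - b8*z2 = - 2*x2*y3^2*z8) \<and>
    (- a7*x2 + b1*z8 + b5*z4 + b6*z3 + b7*z2 = 0) \<and>
    (b2*y2 + b3*y3 - c2*x2 = 0) \<and>
    (b1*y2 + b4*y3 + c1*x2 + n*z2 = 0) \<and>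
    (b1*y3 - b4*y2 + c4*x2 + n*z3 = 0) \<and>
    (- b2*y3 + b3*y2 - c3*x2 + n*z4 = 2*x2*y3*z8^2) \<and>
    (- b6*y2 + b7*y3 + c6*x2 = 0) \<and>
    (b5*y2 + b8*y3 - c5*x2 = 2*x2*y3*z2*z8) \<and>
    (- b5*y3 + b8*y2 - c8*x2 = - 2*x2*y3*z3*z8) \<and>
    (- b6*y3 - b7*y2 + c7*x2 + n*z8 = - 2*x2*y3*z4*z8)) \<longleftrightarrow>
   (b2 = (2*y3*z8^2*Q - z4*R)/(2*y3*(z4^2+z8^2)) \<and>
    b3 = 2*x2*(y2*y3+z2*z3) - b7*z4/z8 \<and>
    b5 = 0 \<and>
    b6 = -(z8*R + 2*y3*z4*z8*Q)/(2*y3*(z4^2+z8^2)) \<and>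
    b8 = 2*x2*z2*z8 \<and>
    a1 = (- b1*z2 - b3*z4 + b4*z3 + b7*z8 - m*y2)/x2 \<and>
    a2 = (b2*z2 + b3*z3 + b4*z4 + b8*z8)/x2 \<and>
    a3 = (- b1*z4 - b2*z3 + b3*z2 + b5*z8)/x2 \<and>
    a4 = (b1*z3 - b2*z4 + b4*z2 - b6*z8 + m*y3)/x2 \<and>
    a5 = (- b3*z8 + b5*z2 - b7*z4 + b8*z3 + 2*x2*y2*y3*z8)/x2 \<and>
    a6 = (b4*z8 + b6*z2 - b7*z3 - b8*z4)/x2 \<and>
    a7 = (b1*z8 + b5*z4 + b6*z3 + b7*z2)/x2 \<and>
    a8 = (- b2*z8 - b5*z3 + b6*z4 + b8*z2 - 2*x2*y3^2*z8)/x2 \<and>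
    c1 = (- b1*y2 - b4*y3 - n*z2)/x2 \<and>
    c2 = (b2*y2 + b3*y3)/x2 \<and>
    c3 = (- b2*y3 + b3*y2 + n*z4 - 2*x2*y3*z8^2)/x2 \<and>
    c4 = (- b1*y3 + b4*y2 - n*z3)/x2 \<and>
    c5 = (b5*y2 + b8*y3 - 2*x2*y3*z2*z8)/x2 \<and>
    c6 = (b6*y2 - b7*y3)/x2 \<and>
    c7 = (b6*y3 + b7*y2 - n*z8 - 2*x2*y3*z4*z8)/x2 \<and>
    c8 = (- b5*y3 + b8*y2 + 2*x2*y3*z3*z8)/x2)"
proof -
  have d: "2*y3*(z4^2+z8^2) \<noteq> 0" using nz(2,3) by (simp add: add_nonneg_eq_0_iff)
  have J: "- 2*b5*y3*z8 = -2*y3*z8*b5" "0 = 0" "2*b8*y3*z8 - 4*x2*y3*z2*z8^2 = 2*y3*z8*(b8 - (2*x2*z2*z8))" "- 2*b5*y3*z4 = -2*y3*z4*b5" "2*b2*y3*z8 - 2*b6*y3*z4 - 2*x2*y2^2*y3*z8 - 2*x2*y3*z2^2*z8 + 2*x2*y3*z3^2*z8 + 2*x2*y3*z4^2*z8 + 2*x2*y3*z8^3 + 2*x2*y3^3*z8 - 2*x2^3*y3*z8 = 2*y3*(z8*b2 - z4*b6 - z8*Q)" "- 2*b3*y3*z8 - 2*b7*y3*z4 + 4*x2*y2*y3^2*z8 + 4*x2*y3*z2*z3*z8 = -2*y3*z8*(b3 - (2*x2*(y2*y3+z2*z3) - b7*z4/z8))" "- 2*b8*y3*z4 + 4*x2*y3*z2*z4*z8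 = -2*y3*z4*(b8 - (2*x2*z2*z8))" "- 2*b1*y2*z2 - 2*b1*y3*z3 + 2*b2*y3*z4 - 2*(2*x2*(y2*y3+z2*z3) - b7*z4/z8)*y2*z4 + 2*b4*y2*z3 - 2*b4*y3*z2 + 2*b6*y3*z8 + 2*b7*y2*z8 - m*y2^2 - m*y3^2 - n*z2^2 - n*z3^2 - n*z4^2 - n*z8^2 + p*x2^2 = 2*y3*z4*b2 + 2*y3*z8*b6 + R"
    by (rule J_ids[OF nz hQ hR])+
  show ?thesis
  proof
    assume H: "(- a2*y2 - a3*y3 + c2*z2 + c3*z3 + c4*z4 + c8*z8 = 0) \<and>     (a1*y2 - a4*y3 + c1*z2 - c3*z4 + c4*z3 + c7*z8 + p*x2 = 0) \<and>     (a1*y3 + a4*y2 + c1*z3 + c2*z4 - c4*z2 + c6*z8 = 0) \<and>     (a2*y3 - a3*y2 + c1*z4 - c2*z3 + c3*z2 + c5*z8 = 0) \<and>     (a6*y2 - a7*y3 - c4*z8 - c6*z2 + c7*z3 + c8*z4 = 0) \<and>     (- a5*y2 - a8*y3 - c3*z8 + c5*z2 - c7*z4 + c8*z3 = 2*x2^2*y3*z8) \<and>     (a5*y3 - a8*y2 - c2*z8 - c5*z3 + c6*z4 + c8*z2 = 0) \<and>     (a6*y3 + a7*y2 + c1*z8 - c5*z4 - c6*z3 - c7*z2 = 0) \<and>     (a2*x2 - b2*z2 - b3*z3 - b4*z4 - b8*z8 = 0) \<and>     (a1*x2 + b1*z2 + b3*z4 - b4*z3 - b7*z8 + m*y2 =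 0) \<and>     (- a4*x2 + b1*z3 - b2*z4 + b4*z2 - b6*z8 + m*y3 = 0) \<and>     (a3*x2 + b1*z4 + b2*z3 - b3*z2 - b5*z8 = 0) \<and>     (- a6*x2 + b4*z8 + b6*z2 - b7*z3 - b8*z4 = 0) \<and>     (a5*x2 + b3*z8 - b5*z2 + b7*z4 - b8*z3 = 2*x2*y2*y3*z8) \<and>     (a8*x2 + b2*z8 + b5*z3 - b6*z4 - b8*z2 = - 2*x2*y3^2*z8) \<and>     (- a7*x2 + b1*z8 + b5*z4 + b6*z3 + b7*z2 = 0) \<and>     (b2*y2 + b3*y3 - c2*x2 = 0) \<and>     (b1*y2 + b4*y3 + c1*x2 + n*z2 = 0) \<and>     (b1*y3 - b4*y2 + c4*x2 + n*z3 = 0) \<and>     (- b2*y3 + b3*y2 - c3*x2 + n*z4 = 2*x2*y3*z8^2) \<and>     (- b6*y2 + b7*y3 + c6*x2 = 0) \<and>     (b5*y2 + b8*y3 - c5*x2 = 2*x2*y3*z2*z8) \<and>     (- b5*y3 + b8*y2 - c8*x2 = - 2*x2*y3*z3*z8) \<and>     (- b6*y3 - b7*y2 + c7*x2 + n*z8 = - 2*x2*y3*z4*z8)"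
    have e0: "- a2*y2 - a3*y3 + c2*z2 + c3*z3 + c4*z4 + c8*z8 = 0" using H by blast
    have e1: "a1*y2 - a4*y3 + c1*z2 - c3*z4 + c4*z3 + c7*z8 + p*x2 = 0" using H by blast
    have e2: "a1*y3 + a4*y2 + c1*z3 + c2*z4 - c4*z2 + c6*z8 = 0" using H by blast
    have e3: "a2*y3 - a3*y2 + c1*z4 - c2*z3 + c3*z2 + c5*z8 = 0" using H by blast
    have e4: "a6*y2 - a7*y3 - c4*z8 - c6*z2 + c7*z3 + c8*z4 = 0" using H by blast
    have e5: "- a5*y2 - a8*y3 - c3*z8 + c5*z2 - c7*z4 + c8*z3 = 2*x2^2*y3*z8" using H by blast
    have e6: "a5*y3 - a8*y2 - c2*z8 - c5*z3 + c6*z4 + c8*z2 = 0" using H by blast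
    have e7: "a6*y3 + a7*y2 + c1*z8 - c5*z4 - c6*z3 - c7*z2 = 0" using H by blast
    have e8: "a2*x2 - b2*z2 - b3*z3 - b4*z4 - b8*z8 = 0" using H by blast
    have e9: "a1*x2 + b1*z2 + b3*z4 - b4*z3 - b7*z8 + m*y2 = 0" using H by blast
    have e10: "- a4*x2 + b1*z3 - b2*z4 + b4*z2 - b6*z8 + m*y3 = 0" using H by blast
    have e11: "a3*x2 + b1*z4 + b2*z3 - b3*z2 - b5*z8 = 0" using H by blast
    have e12: "- a6*x2 + b4*z8 + b6*z2 - b7*z3 - b8*z4 = 0" using H by blast
    have e13: "a5*x2 + b3*z8 - b5*z2 + b7*z4 - b8*z3 = 2*x2*y2*y3*z8" using H by blast
    have e14: "a8*x2 + b2*z8 + b5*z3 - b6*z4 - b8*z2 = - 2*x2*y3^2*z8" using H by blast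
    have e15: "- a7*x2 + b1*z8 + b5*z4 + b6*z3 + b7*z2 = 0" using H by blast
    have e16: "b2*y2 + b3*y3 - c2*x2 = 0" using H by blast
    have e17: "b1*y2 + b4*y3 + c1*x2 + n*z2 = 0" using H by blast
    have e18: "b1*y3 - b4*y2 + c4*x2 + n*z3 = 0" using H by blast
    have e19: "- b2*y3 + b3*y2 - c3*x2 + n*z4 = 2*x2*y3*z8^2" using H by blast
    have e20: "- b6*y2 + b7*y3 + c6*x2 = 0" using H by blast
    have e21: "b5*y2 + b8*y3 - c5*x2 = 2*x2*y3*z2*z8" using H by blast
    have e22: "- b5*y3 + b8*y2 - c8*x2 = - 2*x2*y3*z3*z8" using H by blast
    have e23: "- b6*y3 - b7*y2 + c7*x2 + n*z8 = - 2*x2*y3*z4*z8" using H by blast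
    have m_a1: "a1*x2 = - b1*z2 - b3*z4 + b4*z3 + b7*z8 - m*y2" using e9 by linarith
    have v_a1: "a1 = (- b1*z2 - b3*z4 + b4*z3 + b7*z8 - m*y2)/x2" using m_a1 nz(1) by (simp add: eq_divide_eq)
    have m_a2: "a2*x2 = b2*z2 + b3*z3 + b4*z4 + b8*z8" using e8 by linarith
    have v_a2: "a2 = (b2*z2 + b3*z3 + b4*z4 + b8*z8)/x2" using m_a2 nz(1) by (simp add: eq_divide_eq)
    have m_a3: "a3*x2 = - b1*z4 - b2*z3 + b3*z2 + b5*z8" using e11 by linarith
    have v_a3: "a3 = (- b1*z4 - b2*z3 + b3*z2 + b5*z8)/x2" using m_a3 nz(1) by (simp add: eq_divide_eq)
    have m_a4: "a4*x2 = b1*z3 - b2*z4 + b4*z2 - b6*z8 + m*y3" using e10 by linarith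
    have v_a4: "a4 = (b1*z3 - b2*z4 + b4*z2 - b6*z8 + m*y3)/x2" using m_a4 nz(1) by (simp add: eq_divide_eq)
    have m_a5: "a5*x2 = - b3*z8 + b5*z2 - b7*z4 + b8*z3 + 2*x2*y2*y3*z8" using e13 by linarith
    have v_a5: "a5 = (- b3*z8 + b5*z2 - b7*z4 + b8*z3 + 2*x2*y2*y3*z8)/x2" using m_a5 nz(1) by (simp add: eq_divide_eq)
    have m_a6: "a6*x2 = b4*z8 + b6*z2 - b7*z3 - b8*z4" using e12 by linarith
    have v_a6: "a6 = (b4*z8 + b6*z2 - b7*z3 - b8*z4)/x2" using m_a6 nz(1) by (simp add: eq_divide_eq)
    have m_a7: "a7*x2 = b1*z8 + b5*z4 + b6*z3 + b7*z2" using e15 by linarith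
    have v_a7: "a7 = (b1*z8 + b5*z4 + b6*z3 + b7*z2)/x2" using m_a7 nz(1) by (simp add: eq_divide_eq)
    have m_a8: "a8*x2 = - b2*z8 - b5*z3 + b6*z4 + b8*z2 - 2*x2*y3^2*z8" using e14 by linarith
    have v_a8: "a8 = (- b2*z8 - b5*z3 + b6*z4 + b8*z2 - 2*x2*y3^2*z8)/x2" using m_a8 nz(1) by (simp add: eq_divide_eq)
    have m_c1: "c1*x2 = - b1*y2 - b4*y3 - n*z2" using e17 by linarith
    have v_c1: "c1 = (- b1*y2 - b4*y3 - n*z2)/x2" using m_c1 nz(1) by (simp add: eq_divide_eq)
    have m_c2: "c2*x2 = b2*y2 + b3*y3" using e16 by linarith
    have v_c2: "c2 = (b2*y2 + b3*y3)/x2" using m_c2 nz(1) by (simp add: eq_divide_eq)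
    have m_c3: "c3*x2 = - b2*y3 + b3*y2 + n*z4 - 2*x2*y3*z8^2" using e19 by linarith
    have v_c3: "c3 = (- b2*y3 + b3*y2 + n*z4 - 2*x2*y3*z8^2)/x2" using m_c3 nz(1) by (simp add: eq_divide_eq)
    have m_c4: "c4*x2 = - b1*y3 + b4*y2 - n*z3" using e18 by linarith
    have v_c4: "c4 = (- b1*y3 + b4*y2 - n*z3)/x2" using m_c4 nz(1) by (simp add: eq_divide_eq)
    have m_c5: "c5*x2 = b5*y2 + b8*y3 - 2*x2*y3*z2*z8" using e21 by linarith
    have v_c5: "c5 = (b5*y2 + b8*y3 - 2*x2*y3*z2*z8)/x2" using m_c5 nz(1) by (simp add: eq_divide_eq)
    have m_c6: "c6*x2 = b6*y2 - b7*y3" using e20 by linarith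
    have v_c6: "c6 = (b6*y2 - b7*y3)/x2" using m_c6 nz(1) by (simp add: eq_divide_eq)
    have m_c7: "c7*x2 = b6*y3 + b7*y2 - n*z8 - 2*x2*y3*z4*z8" using e23 by linarith
    have v_c7: "c7 = (b6*y3 + b7*y2 - n*z8 - 2*x2*y3*z4*z8)/x2" using m_c7 nz(1) by (simp add: eq_divide_eq)
    have m_c8: "c8*x2 = - b5*y3 + b8*y2 + 2*x2*y3*z3*z8" using e22 by linarith
    have v_c8: "c8 = (- b5*y3 + b8*y2 + 2*x2*y3*z3*z8)/x2" using m_c8 nz(1) by (simp add: eq_divide_eq)
    have R1: "x2*((- a2*y2 - a3*y3 + c2*z2 + c3*z3 + c4*z4 + c8*z8) - (0)) = - 2*b5*y3*z8" "x2*((a1*y2 - a4*y3 + c1*z2 - c3*z4 + c4*z3 + c7*z8 + p*x2) - (0)) = - 2*b1*y2*z2 - 2*b1*y3*z3 + 2*b2*y3*z4 - 2*b3*y2*z4 + 2*b4*y2*z3 - 2*b4*y3*z2 + 2*b6*y3*z8 + 2*b7*y2*z8 - m*y2^2 - m*y3^2 - n*z2^2 - n*z3^2 - n*z4^2 - n*z8^2 + p*x2^2" "x2*((a1*y3 + a4*y2 + c1*z3 + c2*z4 - c4*z2 + c6*z8) - (0)) = 0" "x2*((a2*y3 - a3*y2 + c1*z4 - c2*z3 + c3*z2 + c5*z8) - (0)) = 2*b8*y3*z8 - 4*x2*y3*z2*z8^2" "x2*((a6*y2 - a7*y3 - c4*z8 - c6*z2 + c7*z3 + c8*z4) - (0))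 = - 2*b5*y3*z4" "x2*((- a5*y2 - a8*y3 - c3*z8 + c5*z2 - c7*z4 + c8*z3) - (2*x2^2*y3*z8)) = 2*b2*y3*z8 - 2*b6*y3*z4 - 2*x2*y2^2*y3*z8 - 2*x2*y3*z2^2*z8 + 2*x2*y3*z3^2*z8 + 2*x2*y3*z4^2*z8 + 2*x2*y3*z8^3 + 2*x2*y3^3*z8 - 2*x2^3*y3*z8" "x2*((a5*y3 - a8*y2 - c2*z8 - c5*z3 + c6*z4 + c8*z2) - (0)) = - 2*b3*y3*z8 - 2*b7*y3*z4 + 4*x2*y2*y3^2*z8 + 4*x2*y3*z2*z3*z8" "x2*((a6*y3 + a7*y2 + c1*z8 - c5*z4 - c6*z3 - c7*z2) - (0)) = - 2*b8*y3*z4 + 4*x2*y3*z2*z4*z8"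
      using nz(1) unfolding v_a1 v_a2 v_a3 v_a4 v_a5 v_a6 v_a7 v_a8 v_c1 v_c2 v_c3 v_c4 v_c5 v_c6 v_c7 v_c8 by (simp_all add: field_simps power2_eq_square power3_eq_cube)
    have w0: "- 2*b5*y3*z8 = 0" using R1(1) e0 by simp
    have w1: "- 2*b1*y2*z2 - 2*b1*y3*z3 + 2*b2*y3*z4 - 2*b3*y2*z4 + 2*b4*y2*z3 - 2*b4*y3*z2 + 2*b6*y3*z8 + 2*b7*y2*z8 - m*y2^2 - m*y3^2 - n*z2^2 - n*z3^2 - n*z4^2 - n*z8^2 + p*x2^2 = 0" using R1(2) e1 by simp
    have w2: "0 = 0" using R1(3) e2 by simp
    have w3: "2*b8*y3*z8 - 4*x2*y3*z2*z8^2 = 0" using R1(4) e3 by simp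
    have w4: "- 2*b5*y3*z4 = 0" using R1(5) e4 by simp
    have w5: "2*b2*y3*z8 - 2*b6*y3*z4 - 2*x2*y2^2*y3*z8 - 2*x2*y3*z2^2*z8 + 2*x2*y3*z3^2*z8 + 2*x2*y3*z4^2*z8 + 2*x2*y3*z8^3 + 2*x2*y3^3*z8 - 2*x2^3*y3*z8 = 0" using R1(6) e5 by simp
    have w6: "- 2*b3*y3*z8 - 2*b7*y3*z4 + 4*x2*y2*y3^2*z8 + 4*x2*y3*z2*z3*z8 = 0" using R1(7) e6 by simp
    have w7: "- 2*b8*y3*z4 + 4*x2*y3*z2*z4*z8 = 0" using R1(8) e7 by simp
    have hb5: "b5 = 0" using J(1) w0 nz by simp
    have hb8: "b8 = 2*x2*z2*z8" using J(3) w3 nz by simp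
    have hb3: "b3 = 2*x2*(y2*y3+z2*z3) - b7*z4/z8" using J(6) w6 nz by simp
    have k1: "z8*b2 - z4*b6 - z8*Q = 0" using J(5) w5 nz by simp
    have w1s: "- 2*b1*y2*z2 - 2*b1*y3*z3 + 2*b2*y3*z4 - 2*(2*x2*(y2*y3+z2*z3) - b7*z4/z8)*y2*z4 + 2*b4*y2*z3 - 2*b4*y3*z2 + 2*b6*y3*z8 + 2*b7*y2*z8 - m*y2^2 - m*y3^2 - n*z2^2 - n*z3^2 - n*z4^2 - n*z8^2 + p*x2^2 = 0" using w1 unfolding hb3 .
    have k2: "2*y3*z4*b2 + 2*y3*z8*b6 + R = 0" by (rule trans[OF J(8)[symmetric] w1s])
    have "2*y3*(z4^2+z8^2)*b2 = 2*y3*z8*(z8*b2 - z4*b6 - z8*Q) + z4*(2*y3*z4*b2 + 2*y3*z8*b6 + R) + (2*y3*z8^2*Q - z4*R)"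
      by (simp add: algebra_simps power2_eq_square)
    hence hb2: "b2 = (2*y3*z8^2*Q - z4*R)/(2*y3*(z4^2+z8^2))" using k1 k2 d by (simp add: eq_divide_eq mult.commute)
    have "2*y3*(z4^2+z8^2)*b6 = -2*y3*z4*(z8*b2 - z4*b6 - z8*Q) + z8*(2*y3*z4*b2 + 2*y3*z8*b6 + R) - (z8*R + 2*y3*z4*z8*Q)"
      by (simp add: algebra_simps power2_eq_square)
    hence hb6: "b6 = -(z8*R + 2*y3*z4*z8*Q)/(2*y3*(z4^2+z8^2))" using k1 k2 d by (simp add: eq_divide_eq mult.commute)
    show "b2 = (2*y3*z8^2*Q - z4*R)/(2*y3*(z4^2+z8^2)) \<and>     b3 = 2*x2*(y2*y3+z2*z3) - b7*z4/z8 \<and>     b5 = 0 \<and>     b6 = -(z8*R + 2*y3*z4*z8*Q)/(2*y3*(z4^2+z8^2)) \<and>     b8 = 2*x2*z2*z8 \<and>     a1 = (- b1*z2 - b3*z4 + b4*z3 + b7*z8 - m*y2)/x2 \<and>     a2 = (b2*z2 + b3*z3 + b4*z4 + b8*z8)/x2 \<and>     a3 = (- b1*z4 - b2*z3 + b3*z2 + b5*z8)/x2 \<and>     a4 = (b1*z3 - b2*z4 + b4*z2 - b6*z8 + m*y3)/x2 \<and>     a5 = (- b3*z8 + b5*z2 - b7*z4 + b8*z3 + 2*x2*y2*y3*z8)/x2 \<and>     a6 = (b4*z8 + b6*z2 - b7*z3 - b8*z4)/x2 \<and>     a7 = (b1*z8 + b5*z4 + b6*z3 + b7*z2)/x2 \<and>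     a8 = (- b2*z8 - b5*z3 + b6*z4 + b8*z2 - 2*x2*y3^2*z8)/x2 \<and>     c1 = (- b1*y2 - b4*y3 - n*z2)/x2 \<and>     c2 = (b2*y2 + b3*y3)/x2 \<and>     c3 = (- b2*y3 + b3*y2 + n*z4 - 2*x2*y3*z8^2)/x2 \<and>     c4 = (- b1*y3 + b4*y2 - n*z3)/x2 \<and>     c5 = (b5*y2 + b8*y3 - 2*x2*y3*z2*z8)/x2 \<and>     c6 = (b6*y2 - b7*y3)/x2 \<and>     c7 = (b6*y3 + b7*y2 - n*z8 - 2*x2*y3*z4*z8)/x2 \<and>     c8 = (- b5*y3 + b8*y2 + 2*x2*y3*z3*z8)/x2" using hb2 hb3 hb5 hb6 hb8 v_a1 v_a2 v_a3 v_a4 v_a5 v_a6 v_a7 v_a8 v_c1 v_c2 v_c3 v_c4 v_c5 v_c6 v_c7 v_c8 by blast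
  next
    assume H: "b2 = (2*y3*z8^2*Q - z4*R)/(2*y3*(z4^2+z8^2)) \<and>     b3 = 2*x2*(y2*y3+z2*z3) - b7*z4/z8 \<and>     b5 = 0 \<and>     b6 = -(z8*R + 2*y3*z4*z8*Q)/(2*y3*(z4^2+z8^2)) \<and>     b8 = 2*x2*z2*z8 \<and>     a1 = (- b1*z2 - b3*z4 + b4*z3 + b7*z8 - m*y2)/x2 \<and>     a2 = (b2*z2 + b3*z3 + b4*z4 + b8*z8)/x2 \<and>     a3 = (- b1*z4 - b2*z3 + b3*z2 + b5*z8)/x2 \<and>     a4 = (b1*z3 - b2*z4 + b4*z2 - b6*z8 + m*y3)/x2 \<and>     a5 = (- b3*z8 + b5*z2 - b7*z4 + b8*z3 + 2*x2*y2*y3*z8)/x2 \<and>     a6 = (b4*z8 + b6*z2 - b7*z3 - b8*z4)/x2 \<and>     a7 = (b1*z8 + b5*z4 + b6*z3 + b7*z2)/x2 \<and>     a8 = (- b2*z8 - b5*z3 + b6*z4 + b8*z2 - 2*x2*y3^2*z8)/x2 \<and>     c1 = (- b1*y2 - b4*y3 - n*z2)/x2 \<and>     c2 = (b2*y2 + b3*y3)/x2 \<and>     c3 = (- b2*y3 + b3*y2 + n*z4 - 2*x2*y3*z8^2)/x2 \<and>     c4 = (- b1*y3 + b4*y2 - n*z3)/x2 \<and>     c5 = (b5*y2 + b8*y3 - 2*x2*y3*z2*z8)/x2 \<and>     c6 = (b6*y2 - b7*y3)/x2 \<and>     c7 = (b6*y3 + b7*y2 - n*z8 - 2*x2*y3*z4*z8)/x2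 \<and>     c8 = (- b5*y3 + b8*y2 + 2*x2*y3*z3*z8)/x2"
    have v_b2: "b2 = (2*y3*z8^2*Q - z4*R)/(2*y3*(z4^2+z8^2))" using H by blast
    have v_b3: "b3 = 2*x2*(y2*y3+z2*z3) - b7*z4/z8" using H by blast
    have v_b5: "b5 = 0" using H by blast
    have v_b6: "b6 = -(z8*R + 2*y3*z4*z8*Q)/(2*y3*(z4^2+z8^2))" using H by blast
    have v_b8: "b8 = 2*x2*z2*z8" using H by blast
    have v_a1: "a1 = (- b1*z2 - b3*z4 + b4*z3 + b7*z8 - m*y2)/x2" using H by blast
    have v_a2: "a2 = (b2*z2 + b3*z3 + b4*z4 + b8*z8)/x2" using H by blast
    have v_a3: "a3 = (- b1*z4 - b2*z3 + b3*z2 + b5*z8)/x2" using H by blast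
    have v_a4: "a4 = (b1*z3 - b2*z4 + b4*z2 - b6*z8 + m*y3)/x2" using H by blast
    have v_a5: "a5 = (- b3*z8 + b5*z2 - b7*z4 + b8*z3 + 2*x2*y2*y3*z8)/x2" using H by blast
    have v_a6: "a6 = (b4*z8 + b6*z2 - b7*z3 - b8*z4)/x2" using H by blast
    have v_a7: "a7 = (b1*z8 + b5*z4 + b6*z3 + b7*z2)/x2" using H by blast
    have v_a8: "a8 = (- b2*z8 - b5*z3 + b6*z4 + b8*z2 - 2*x2*y3^2*z8)/x2" using H by blast
    have v_c1: "c1 = (- b1*y2 - b4*y3 - n*z2)/x2" using H by blast
    have v_c2: "c2 = (b2*y2 + b3*y3)/x2" using H by blast
    have v_c3: "c3 = (- b2*y3 + b3*y2 + n*z4 - 2*x2*y3*z8^2)/x2" using H by blast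
    have v_c4: "c4 = (- b1*y3 + b4*y2 - n*z3)/x2" using H by blast
    have v_c5: "c5 = (b5*y2 + b8*y3 - 2*x2*y3*z2*z8)/x2" using H by blast
    have v_c6: "c6 = (b6*y2 - b7*y3)/x2" using H by blast
    have v_c7: "c7 = (b6*y3 + b7*y2 - n*z8 - 2*x2*y3*z4*z8)/x2" using H by blast
    have v_c8: "c8 = (- b5*y3 + b8*y2 + 2*x2*y3*z3*z8)/x2" using H by blast
    have m_a1: "a1*x2 = - b1*z2 - b3*z4 + b4*z3 + b7*z8 - m*y2" using v_a1 nz(1) by (simp add: eq_divide_eq)
    have m_a2: "a2*x2 = b2*z2 + b3*z3 + b4*z4 + b8*z8" using v_a2 nz(1) by (simp add: eq_divide_eq)
    have m_a3: "a3*x2 = - b1*z4 - b2*z3 + b3*z2 + b5*z8" using v_a3 nz(1) by (simp add: eq_divide_eq)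
    have m_a4: "a4*x2 = b1*z3 - b2*z4 + b4*z2 - b6*z8 + m*y3" using v_a4 nz(1) by (simp add: eq_divide_eq)
    have m_a5: "a5*x2 = - b3*z8 + b5*z2 - b7*z4 + b8*z3 + 2*x2*y2*y3*z8" using v_a5 nz(1) by (simp add: eq_divide_eq)
    have m_a6: "a6*x2 = b4*z8 + b6*z2 - b7*z3 - b8*z4" using v_a6 nz(1) by (simp add: eq_divide_eq)
    have m_a7: "a7*x2 = b1*z8 + b5*z4 + b6*z3 + b7*z2" using v_a7 nz(1) by (simp add: eq_divide_eq)
    have m_a8: "a8*x2 = - b2*z8 - b5*z3 + b6*z4 + b8*z2 - 2*x2*y3^2*z8" using v_a8 nz(1) by (simp add: eq_divide_eq)
    have m_c1: "c1*x2 = - b1*y2 - b4*y3 - n*z2" using v_c1 nz(1) by (simp add: eq_divide_eq)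
    have m_c2: "c2*x2 = b2*y2 + b3*y3" using v_c2 nz(1) by (simp add: eq_divide_eq)
    have m_c3: "c3*x2 = - b2*y3 + b3*y2 + n*z4 - 2*x2*y3*z8^2" using v_c3 nz(1) by (simp add: eq_divide_eq)
    have m_c4: "c4*x2 = - b1*y3 + b4*y2 - n*z3" using v_c4 nz(1) by (simp add: eq_divide_eq)
    have m_c5: "c5*x2 = b5*y2 + b8*y3 - 2*x2*y3*z2*z8" using v_c5 nz(1) by (simp add: eq_divide_eq)
    have m_c6: "c6*x2 = b6*y2 - b7*y3" using v_c6 nz(1) by (simp add: eq_divide_eq)
    have m_c7: "c7*x2 = b6*y3 + b7*y2 - n*z8 - 2*x2*y3*z4*z8" using v_c7 nz(1) by (simp add: eq_divide_eq)
    have m_c8: "c8*x2 = - b5*y3 + b8*y2 + 2*x2*y3*z3*z8" using v_c8 nz(1) by (simp add: eq_divide_eq)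
    have R1: "x2*((- a2*y2 - a3*y3 + c2*z2 + c3*z3 + c4*z4 + c8*z8) - (0)) = - 2*b5*y3*z8" "x2*((a1*y2 - a4*y3 + c1*z2 - c3*z4 + c4*z3 + c7*z8 + p*x2) - (0)) = - 2*b1*y2*z2 - 2*b1*y3*z3 + 2*b2*y3*z4 - 2*b3*y2*z4 + 2*b4*y2*z3 - 2*b4*y3*z2 + 2*b6*y3*z8 + 2*b7*y2*z8 - m*y2^2 - m*y3^2 - n*z2^2 - n*z3^2 - n*z4^2 - n*z8^2 + p*x2^2" "x2*((a1*y3 + a4*y2 + c1*z3 + c2*z4 - c4*z2 + c6*z8) - (0)) = 0" "x2*((a2*y3 - a3*y2 + c1*z4 - c2*z3 + c3*z2 + c5*z8) - (0)) = 2*b8*y3*z8 - 4*x2*y3*z2*z8^2" "x2*((a6*y2 - a7*y3 - c4*z8 - c6*z2 + c7*z3 + c8*z4) - (0)) = - 2*b5*y3*z4" "x2*((- a5*y2 - a8*y3 - c3*z8 + c5*z2 - c7*z4 + c8*z3) - (2*x2^2*y3*z8)) = 2*b2*y3*z8 - 2*b6*y3*z4 - 2*x2*y2^2*y3*z8 - 2*x2*y3*z2^2*z8 + 2*x2*y3*z3^2*z8 + 2*x2*y3*z4^2*z8 + 2*x2*y3*z8^3 + 2*x2*y3^3*z8 - 2*x2^3*y3*z8" "x2*((a5*y3 - a8*y2 - c2*z8 - c5*z3 + c6*z4 + c8*z2) - (0)) = - 2*b3*y3*z8 - 2*b7*y3*z4 + 4*x2*y2*y3^2*z8 + 4*x2*y3*z2*z3*z8"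 "x2*((a6*y3 + a7*y2 + c1*z8 - c5*z4 - c6*z3 - c7*z2) - (0)) = - 2*b8*y3*z4 + 4*x2*y3*z2*z4*z8"
      using nz(1) unfolding v_a1 v_a2 v_a3 v_a4 v_a5 v_a6 v_a7 v_a8 v_c1 v_c2 v_c3 v_c4 v_c5 v_c6 v_c7 v_c8 by (simp_all add: field_simps power2_eq_square power3_eq_cube)
    have n2: "b2*(2*y3*(z4^2+z8^2)) = (2*y3*z8^2*Q - z4*R)" using v_b2 d by (simp add: eq_divide_eq)
    have n6: "b6*(2*y3*(z4^2+z8^2)) = (-(z8*R + 2*y3*z4*z8*Q))" using v_b6 d by (simp add: eq_divide_eq minus_divide_left)
    have "(2*y3*(z4^2+z8^2))*(z8*b2 - z4*b6 - z8*Q) = z8*(b2*(2*y3*(z4^2+z8^2))) - z4*(b6*(2*y3*(z4^2+z8^2))) - z8*Q*(2*y3*(z4^2+z8^2))" by (simp add: algebra_simps)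
    also have "... = 0" unfolding n2 n6 by (simp add: algebra_simps power2_eq_square)
    finally have k1: "z8*b2 - z4*b6 - z8*Q = 0" using d nz by auto
    have "(2*y3*(z4^2+z8^2))*(2*y3*z4*b2 + 2*y3*z8*b6 + R) = 2*y3*z4*(b2*(2*y3*(z4^2+z8^2))) + 2*y3*z8*(b6*(2*y3*(z4^2+z8^2))) + R*(2*y3*(z4^2+z8^2))" by (simp add: algebra_simps)
    also have "... = 0" unfolding n2 n6 by (simp add: algebra_simps power2_eq_square)
    finally have k2: "2*y3*z4*b2 + 2*y3*z8*b6 + R = 0" using d nz by auto
    have w0: "- 2*b5*y3*z8 = 0" unfolding J(1) by (simp add: v_b5 power2_eq_square)
    have w1: "- 2*b1*y2*z2 - 2*b1*y3*z3 + 2*b2*y3*z4 - 2*b3*y2*z4 + 2*b4*y2*z3 - 2*b4*y3*z2 + 2*b6*y3*z8 + 2*b7*y2*z8 - m*y2^2 - m*y3^2 - n*z2^2 - n*z3^2 - n*z4^2 - n*z8^2 + p*x2^2 = 0" using trans[OF J(8) k2] by (subst v_b3)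
    have w2: "0 = (0::real)" by simp
    have w3: "2*b8*y3*z8 - 4*x2*y3*z2*z8^2 = 0" unfolding J(3) by (simp add: v_b8 power2_eq_square)
    have w4: "- 2*b5*y3*z4 = 0" unfolding J(4) by (simp add: v_b5 power2_eq_square)
    have w5: "2*b2*y3*z8 - 2*b6*y3*z4 - 2*x2*y2^2*y3*z8 - 2*x2*y3*z2^2*z8 + 2*x2*y3*z3^2*z8 + 2*x2*y3*z4^2*z8 + 2*x2*y3*z8^3 + 2*x2*y3^3*z8 - 2*x2^3*y3*z8 = 0" unfolding J(5) using k1 by simp
    have w6: "- 2*b3*y3*z8 - 2*b7*y3*z4 + 4*x2*y2*y3^2*z8 + 4*x2*y3*z2*z3*z8 = 0" unfolding J(6) by (simp add: v_b3 power2_eq_square)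
    have w7: "- 2*b8*y3*z4 + 4*x2*y3*z2*z4*z8 = 0" unfolding J(7) by (simp add: v_b8 power2_eq_square)
    have "(- a2*y2 - a3*y3 + c2*z2 + c3*z3 + c4*z4 + c8*z8) - (0) = 0" using trans[OF R1(1) w0] nz(1) by simp
    hence e0: "- a2*y2 - a3*y3 + c2*z2 + c3*z3 + c4*z4 + c8*z8 = 0" by linarith
    have "(a1*y2 - a4*y3 + c1*z2 - c3*z4 + c4*z3 + c7*z8 + p*x2) - (0) = 0" using trans[OF R1(2) w1] nz(1) by simp
    hence e1: "a1*y2 - a4*y3 + c1*z2 - c3*z4 + c4*z3 + c7*z8 + p*x2 = 0" by linarith
    have "(a1*y3 + a4*y2 + c1*z3 + c2*z4 - c4*z2 + c6*z8) - (0) = 0" using trans[OF R1(3) w2] nz(1) by simp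
    hence e2: "a1*y3 + a4*y2 + c1*z3 + c2*z4 - c4*z2 + c6*z8 = 0" by linarith
    have "(a2*y3 - a3*y2 + c1*z4 - c2*z3 + c3*z2 + c5*z8) - (0) = 0" using trans[OF R1(4) w3] nz(1) by simp
    hence e3: "a2*y3 - a3*y2 + c1*z4 - c2*z3 + c3*z2 + c5*z8 = 0" by linarith
    have "(a6*y2 - a7*y3 - c4*z8 - c6*z2 + c7*z3 + c8*z4) - (0) = 0" using trans[OF R1(5) w4] nz(1) by simp
    hence e4: "a6*y2 - a7*y3 - c4*z8 - c6*z2 + c7*z3 + c8*z4 = 0" by linarith
    have "(- a5*y2 - a8*y3 - c3*z8 + c5*z2 - c7*z4 + c8*z3) - (2*x2^2*y3*z8) = 0" using trans[OF R1(6) w5] nz(1) by simp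
    hence e5: "- a5*y2 - a8*y3 - c3*z8 + c5*z2 - c7*z4 + c8*z3 = 2*x2^2*y3*z8" by linarith
    have "(a5*y3 - a8*y2 - c2*z8 - c5*z3 + c6*z4 + c8*z2) - (0) = 0" using trans[OF R1(7) w6] nz(1) by simp
    hence e6: "a5*y3 - a8*y2 - c2*z8 - c5*z3 + c6*z4 + c8*z2 = 0" by linarith
    have "(a6*y3 + a7*y2 + c1*z8 - c5*z4 - c6*z3 - c7*z2) - (0) = 0" using trans[OF R1(8) w7] nz(1) by simp
    hence e7: "a6*y3 + a7*y2 + c1*z8 - c5*z4 - c6*z3 - c7*z2 = 0" by linarith
    have e8: "a2*x2 - b2*z2 - b3*z3 - b4*z4 - b8*z8 = 0" using m_a2 by linarith
    have e9: "a1*x2 + b1*z2 + b3*z4 - b4*z3 - b7*z8 + m*y2 = 0" using m_a1 by linarith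
    have e10: "- a4*x2 + b1*z3 - b2*z4 + b4*z2 - b6*z8 + m*y3 = 0" using m_a4 by linarith
    have e11: "a3*x2 + b1*z4 + b2*z3 - b3*z2 - b5*z8 = 0" using m_a3 by linarith
    have e12: "- a6*x2 + b4*z8 + b6*z2 - b7*z3 - b8*z4 = 0" using m_a6 by linarith
    have e13: "a5*x2 + b3*z8 - b5*z2 + b7*z4 - b8*z3 = 2*x2*y2*y3*z8" using m_a5 by linarith
    have e14: "a8*x2 + b2*z8 + b5*z3 - b6*z4 - b8*z2 = - 2*x2*y3^2*z8" using m_a8 by linarith
    have e15: "- a7*x2 + b1*z8 + b5*z4 + b6*z3 + b7*z2 = 0" using m_a7 by linarith
    have e16: "b2*y2 + b3*y3 - c2*x2 = 0" using m_c2 by linarith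
    have e17: "b1*y2 + b4*y3 + c1*x2 + n*z2 = 0" using m_c1 by linarith
    have e18: "b1*y3 - b4*y2 + c4*x2 + n*z3 = 0" using m_c4 by linarith
    have e19: "- b2*y3 + b3*y2 - c3*x2 + n*z4 = 2*x2*y3*z8^2" using m_c3 by linarith
    have e20: "- b6*y2 + b7*y3 + c6*x2 = 0" using m_c6 by linarith
    have e21: "b5*y2 + b8*y3 - c5*x2 = 2*x2*y3*z2*z8" using m_c5 by linarith
    have e22: "- b5*y3 + b8*y2 - c8*x2 = - 2*x2*y3*z3*z8" using m_c8 by linarith
    have e23: "- b6*y3 - b7*y2 + c7*x2 + n*z8 = - 2*x2*y3*z4*z8" using m_c7 by linarith
    show "(- a2*y2 - a3*y3 + c2*z2 + c3*z3 + c4*z4 + c8*z8 = 0) \<and>     (a1*y2 - a4*y3 + c1*z2 - c3*z4 + c4*z3 + c7*z8 + p*x2 = 0) \<and>     (a1*y3 + a4*y2 + c1*z3 + c2*z4 - c4*z2 + c6*z8 = 0) \<and>     (a2*y3 - a3*y2 + c1*z4 - c2*z3 + c3*z2 + c5*z8 = 0) \<and>     (a6*y2 - a7*y3 - c4*z8 - c6*z2 + c7*z3 + c8*z4 = 0) \<and>     (- a5*y2 - a8*y3 - c3*z8 + c5*z2 - c7*z4 + c8*z3 = 2*x2^2*y3*z8) \<and>     (a5*y3 - a8*y2 - c2*z8 - c5*z3 + c6*z4 + c8*z2 = 0) \<and>     (a6*y3 + a7*y2 + c1*z8 - c5*z4 - c6*z3 - c7*z2 = 0) \<and>     (a2*x2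 - b2*z2 - b3*z3 - b4*z4 - b8*z8 = 0) \<and>     (a1*x2 + b1*z2 + b3*z4 - b4*z3 - b7*z8 + m*y2 = 0) \<and>     (- a4*x2 + b1*z3 - b2*z4 + b4*z2 - b6*z8 + m*y3 = 0) \<and>     (a3*x2 + b1*z4 + b2*z3 - b3*z2 - b5*z8 = 0) \<and>     (- a6*x2 + b4*z8 + b6*z2 - b7*z3 - b8*z4 = 0) \<and>     (a5*x2 + b3*z8 - b5*z2 + b7*z4 - b8*z3 = 2*x2*y2*y3*z8) \<and>     (a8*x2 + b2*z8 + b5*z3 - b6*z4 - b8*z2 = - 2*x2*y3^2*z8) \<and>     (- a7*x2 + b1*z8 + b5*z4 + b6*z3 + b7*z2 = 0) \<and>     (b2*y2 + b3*y3 - c2*x2 = 0) \<and>     (b1*y2 + b4*y3 + c1*x2 + n*z2 = 0) \<and>     (b1*y3 - b4*y2 + c4*x2 + n*z3 = 0) \<and>     (- b2*y3 + b3*y2 - c3*x2 + n*z4 = 2*x2*y3*z8^2) \<and>     (- b6*y2 + b7*y3 + c6*x2 = 0) \<and>     (b5*y2 + b8*y3 - c5*x2 = 2*x2*y3*z2*z8) \<and>     (- b5*y3 + b8*y2 - c8*x2 = - 2*x2*y3*z3*z8) \<and>     (- b6*y3 - b7*y2 + c7*x2 + n*z8 = - 2*x2*y3*z4*z8)" using e0 e1 e2 e3 e4 e5 e6 e7 e8 e9 e10 e11 e12 e13 e14 e15 e16 e17 e18 e19 e20 e21 e22 e23 by blast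
  qed
qed

lemma gen_eqs2: assumes g: "genf x y z"
  and hx: "x$Ei = x2" "y$Ei = y2" "y$Ej = y3" "z$Ei = z2" "z$Ej = z3" "z$Ek = z4" "z$El = z8"
  shows "eigen_eq (p,m,n,a,b,c) x y z \<longleftrightarrow>
   ((- a$Ei*y2 - a$Ej*y3 + c$Ei*z2 + c$Ej*z3 + c$Ek*z4 + c$El*z8 = 0) \<and>
    (a$E1*y2 - a$Ek*y3 + c$E1*z2 - c$Ej*z4 + c$Ek*z3 + c$Eil*z8 + p*x2 = 0) \<and>
    (a$E1*y3 + a$Ek*y2 + c$E1*z3 + c$Ei*z4 - c$Ek*z2 + c$Ejl*z8 = 0) \<and>
    (a$Ei*y3 - a$Ej*y2 + c$E1*z4 - c$Ei*z3 + c$Ej*z2 + c$Ekl*z8 = 0) \<and>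
    (a$Ejl*y2 - a$Eil*y3 - c$Ek*z8 - c$Ejl*z2 + c$Eil*z3 + c$El*z4 = 0) \<and>
    (- a$Ekl*y2 - a$El*y3 - c$Ej*z8 + c$Ekl*z2 - c$Eil*z4 + c$El*z3 = 2*x2^2*y3*z8) \<and>
    (a$Ekl*y3 - a$El*y2 - c$Ei*z8 - c$Ekl*z3 + c$Ejl*z4 + c$El*z2 = 0) \<and>
    (a$Ejl*y3 + a$Eil*y2 + c$E1*z8 - c$Ekl*z4 - c$Ejl*z3 - c$Eil*z2 = 0) \<and>
    (a$Ei*x2 - b$Ei*z2 - b$Ej*z3 - b$Ek*z4 - b$El*z8 = 0) \<and>
    (a$E1*x2 + b$E1*z2 + b$Ej*z4 - b$Ek*z3 - b$Eil*z8 + m*y2 = 0) \<and>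
    (- a$Ek*x2 + b$E1*z3 - b$Ei*z4 + b$Ek*z2 - b$Ejl*z8 + m*y3 = 0) \<and>
    (a$Ej*x2 + b$E1*z4 + b$Ei*z3 - b$Ej*z2 - b$Ekl*z8 = 0) \<and>
    (- a$Ejl*x2 + b$Ek*z8 + b$Ejl*z2 - b$Eil*z3 - b$El*z4 = 0) \<and>
    (a$Ekl*x2 + b$Ej*z8 - b$Ekl*z2 + b$Eil*z4 - b$El*z3 = 2*x2*y2*y3*z8) \<and>
    (a$El*x2 + b$Ei*z8 + b$Ekl*z3 - b$Ejl*z4 - b$El*z2 = - 2*x2*y3^2*z8) \<and>
    (- a$Eil*x2 + b$E1*z8 + b$Ekl*z4 + b$Ejl*z3 + b$Eil*z2 = 0) \<and>
    (b$Ei*y2 + b$Ej*y3 - c$Ei*x2 = 0) \<and>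
    (b$E1*y2 + b$Ek*y3 + c$E1*x2 + n*z2 = 0) \<and>
    (b$E1*y3 - b$Ek*y2 + c$Ek*x2 + n*z3 = 0) \<and>
    (- b$Ei*y3 + b$Ej*y2 - c$Ej*x2 + n*z4 = 2*x2*y3*z8^2) \<and>
    (- b$Ejl*y2 + b$Eil*y3 + c$Ejl*x2 = 0) \<and>
    (b$Ekl*y2 + b$El*y3 - c$Ekl*x2 = 2*x2*y3*z2*z8) \<and>
    (- b$Ekl*y3 + b$El*y2 - c$El*x2 = - 2*x2*y3*z3*z8) \<and>
    (- b$Ejl*y3 - b$Eil*y2 + c$Eil*x2 + n*z8 = - 2*x2*y3*z4*z8))"
  unfolding eigen_eq_def assoc_gen[OF g] Let_def prod.case oct_eq_iff
  using genf_D[OF g]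
  apply (simp add: omul_comp ocnj_comp hx)
  apply (intro conj_cong)
  apply (simp_all add: algebra_simps power2_eq_square)
  done

definition mkoct :: "real \<Rightarrow> real \<Rightarrow> real \<Rightarrow> real \<Rightarrow> real \<Rightarrow> real \<Rightarrow> real \<Rightarrow> real \<Rightarrow> oct" where
  "mkoct v1 v2 v3 v4 v5 v6 v7 v8 = (\<chi> e. case e of E1 \<Rightarrow> v1 | Ei \<Rightarrow> v2 | Ej \<Rightarrow> v3 | Ek \<Rightarrow> v4 | Ekl \<Rightarrow> v5 | Ejl \<Rightarrow> v6 | Eil \<Rightarrow> v7 | El \<Rightarrow> v8)"
lemma mkoct_comp [simp]: "mkoct v1 v2 v3 v4 v5 v6 v7 v8 $ E1 = v1" "mkoct v1 v2 v3 v4 v5 v6 v7 v8 $ Ei = v2" "mkoct v1 v2 v3 v4 v5 v6 v7 v8 $ Ej = v3" "mkoct v1 v2 v3 v4 v5 v6 v7 v8 $ Ek = v4" "mkoct v1 v2 v3 v4 v5 v6 v7 v8 $ Ekl = v5" "mkoct v1 v2 v3 v4 v5 v6 v7 v8 $ Ejl = v6" "mkoct v1 v2 v3 v4 v5 v6 v7 v8 $ Eil = v7" "mkoct v1 v2 v3 v4 v5 v6 v7 v8 $ El = v8"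
  by (simp_all add: mkoct_def)

lemma gen_char:
  fixes x2 y2 y3 z2 z3 z4 z8 p m n b1 b4 b7 Q R :: real
  assumes g: "genf x y z"
  and hx: "x$Ei = x2" "y$Ei = y2" "y$Ej = y3" "z$Ei = z2" "z$Ej = z3" "z$Ek = z4" "z$El = z8"
  and nz: "x2 \<noteq> 0" "y3 \<noteq> 0" "z8 \<noteq> 0"
    and hQ: "Q = x2*(y2^2+z2^2+x2^2-z3^2-z4^2-z8^2-y3^2)"
    and hR: "R = -2*b1*y2*z2 - 2*b1*y3*z3 - 2*(2*x2*(y2*y3+z2*z3) - b7*z4/z8)*y2*z4 + 2*b4*y2*z3 - 2*b4*y3*z2 + 2*b7*y2*z8 - m*y2^2 - m*y3^2 - n*(z2^2+z3^2+z4^2+z8^2) + p*x2^2"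
  shows "(eigen_eq (p',m',n',a,b,c) x y z \<and> p' = p \<and> m' = m \<and> n' = n \<and> b$E1 = b1 \<and> b$Ek = b4 \<and> b$Eil = b7) \<longleftrightarrow>
    (p',m',n',a,b,c) = (p,m,n,mkoct ((- b1*z2 - (2*x2*(y2*y3+z2*z3) - b7*z4/z8)*z4 + b4*z3 + b7*z8 - m*y2)/x2) ((((2*y3*z8^2*Q - z4*R)/(2*y3*(z4^2+z8^2)))*z2 + (2*x2*(y2*y3+z2*z3) - b7*z4/z8)*z3 + b4*z4 + (2*x2*z2*z8)*z8)/x2) ((- b1*z4 - ((2*y3*z8^2*Q - z4*R)/(2*y3*(z4^2+z8^2)))*z3 + (2*x2*(y2*y3+z2*z3) - b7*z4/z8)*z2 + 0*z8)/x2) ((b1*z3 - ((2*y3*z8^2*Q - z4*R)/(2*y3*(z4^2+z8^2)))*z4 + b4*z2 - (-(z8*R + 2*y3*z4*z8*Q)/(2*y3*(z4^2+z8^2)))*z8 + m*y3)/x2) ((- (2*x2*(y2*y3+z2*z3) - b7*z4/z8)*z8 + 0*z2 - b7*z4 + (2*x2*z2*z8)*z3 + 2*x2*y2*y3*z8)/x2) ((b4*z8 + (-(z8*R + 2*y3*z4*z8*Q)/(2*y3*(z4^2+z8^2)))*z2 - b7*z3 - (2*x2*z2*z8)*z4)/x2) ((b1*z8 + 0*z4 + (-(z8*R + 2*y3*z4*z8*Q)/(2*y3*(z4^2+z8^2)))*z3 + b7*z2)/x2) ((- ((2*y3*z8^2*Q - z4*R)/(2*y3*(z4^2+z8^2)))*z8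 - 0*z3 + (-(z8*R + 2*y3*z4*z8*Q)/(2*y3*(z4^2+z8^2)))*z4 + (2*x2*z2*z8)*z2 - 2*x2*y3^2*z8)/x2),
      mkoct (b1) (((2*y3*z8^2*Q - z4*R)/(2*y3*(z4^2+z8^2)))) ((2*x2*(y2*y3+z2*z3) - b7*z4/z8)) (b4) (0) ((-(z8*R + 2*y3*z4*z8*Q)/(2*y3*(z4^2+z8^2)))) (b7) ((2*x2*z2*z8)),
      mkoct ((- b1*y2 - b4*y3 - n*z2)/x2) ((((2*y3*z8^2*Q - z4*R)/(2*y3*(z4^2+z8^2)))*y2 + (2*x2*(y2*y3+z2*z3) - b7*z4/z8)*y3)/x2) ((- ((2*y3*z8^2*Q - z4*R)/(2*y3*(z4^2+z8^2)))*y3 + (2*x2*(y2*y3+z2*z3) - b7*z4/z8)*y2 + n*z4 - 2*x2*y3*z8^2)/x2) ((- b1*y3 + b4*y2 - n*z3)/x2) ((0*y2 + (2*x2*z2*z8)*y3 - 2*x2*y3*z2*z8)/x2) (((-(z8*R + 2*y3*z4*z8*Q)/(2*y3*(z4^2+z8^2)))*y2 - b7*y3)/x2) (((-(z8*R + 2*y3*z4*z8*Q)/(2*y3*(z4^2+z8^2)))*y3 + b7*y2 - n*z8 - 2*x2*y3*z4*z8)/x2) ((- 0*y3 + (2*x2*z2*z8)*y2 + 2*x2*y3*z3*z8)/x2))"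
proof -
  note GR = gen_real[where ?a1.0="a$E1" and ?a2.0="a$Ei" and ?a3.0="a$Ej" and ?a4.0="a$Ek" and ?a5.0="a$Ekl" and ?a6.0="a$Ejl" and ?a7.0="a$Eil" and ?a8.0="a$El" and ?c1.0="c$E1" and ?c2.0="c$Ei" and ?c3.0="c$Ej" and ?c4.0="c$Ek" and ?c5.0="c$Ekl" and ?c6.0="c$Ejl" and ?c7.0="c$Eil" and ?c8.0="c$El" and ?b2.0="b$Ei" and ?b3.0="b$Ej" and ?b5.0="b$Ekl" and ?b6.0="b$Ejl" and ?b8.0="b$El", OF nz hQ hR]
  note GE = gen_eqs2[OF g hx]
  show ?thesis
  proof
    assume H: "eigen_eq (p',m',n',a,b,c) x y z \<and> p' = p \<and> m' = m \<and> n' = n \<and> b$E1 = b1 \<and> b$Ek = b4 \<and> b$Eil = b7"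
    hence E: "eigen_eq (p,m,n,a,b,c) x y z" and hp: "p' = p" "m' = m" "n' = n" and hb: "b$E1 = b1" "b$Ek = b4" "b$Eil = b7" by auto
    have "(- a$Ei*y2 - a$Ej*y3 + c$Ei*z2 + c$Ej*z3 + c$Ek*z4 + c$El*z8 = 0) \<and>     (a$E1*y2 - a$Ek*y3 + c$E1*z2 - c$Ej*z4 + c$Ek*z3 + c$Eil*z8 + p*x2 = 0) \<and>     (a$E1*y3 + a$Ek*y2 + c$E1*z3 + c$Ei*z4 - c$Ek*z2 + c$Ejl*z8 = 0) \<and>     (a$Ei*y3 - a$Ej*y2 + c$E1*z4 - c$Ei*z3 + c$Ej*z2 + c$Ekl*z8 = 0) \<and>     (a$Ejl*y2 - a$Eil*y3 - c$Ek*z8 - c$Ejl*z2 + c$Eil*z3 + c$El*z4 = 0) \<and>     (- a$Ekl*y2 - a$El*y3 - c$Ej*z8 + c$Ekl*z2 - c$Eil*z4 + c$El*z3 = 2*x2^2*y3*z8) \<and>     (a$Ekl*y3 - a$El*y2 - c$Ei*z8 - c$Ekl*z3 + c$Ejl*z4 + c$El*z2 = 0) \<and>     (a$Ejl*y3 + a$Eil*y2 + c$E1*z8 - c$Ekl*z4 - c$Ejl*z3 - c$Eil*z2 = 0) \<and>     (a$Ei*x2 - b$Ei*z2 - b$Ej*z3 - b4*z4 - b$El*z8 = 0) \<and>     (a$E1*x2 + b1*z2 + b$Ej*z4 - b4*z3 - b7*z8 + m*y2 = 0) \<and>     (- a$Ek*x2 + b1*z3 - b$Ei*z4 + b4*z2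 - b$Ejl*z8 + m*y3 = 0) \<and>     (a$Ej*x2 + b1*z4 + b$Ei*z3 - b$Ej*z2 - b$Ekl*z8 = 0) \<and>     (- a$Ejl*x2 + b4*z8 + b$Ejl*z2 - b7*z3 - b$El*z4 = 0) \<and>     (a$Ekl*x2 + b$Ej*z8 - b$Ekl*z2 + b7*z4 - b$El*z3 = 2*x2*y2*y3*z8) \<and>     (a$El*x2 + b$Ei*z8 + b$Ekl*z3 - b$Ejl*z4 - b$El*z2 = - 2*x2*y3^2*z8) \<and>     (- a$Eil*x2 + b1*z8 + b$Ekl*z4 + b$Ejl*z3 + b7*z2 = 0) \<and>     (b$Ei*y2 + b$Ej*y3 - c$Ei*x2 = 0) \<and>     (b1*y2 + b4*y3 + c$E1*x2 + n*z2 = 0) \<and>     (b1*y3 - b4*y2 + c$Ek*x2 + n*z3 = 0) \<and>     (- b$Ei*y3 + b$Ej*y2 - c$Ej*x2 + n*z4 = 2*x2*y3*z8^2) \<and>     (- b$Ejl*y2 + b7*y3 + c$Ejl*x2 = 0) \<and>     (b$Ekl*y2 + b$El*y3 - c$Ekl*x2 = 2*x2*y3*z2*z8) \<and>     (- b$Ekl*y3 + b$El*y2 - c$El*x2 = - 2*x2*y3*z3*z8) \<and>     (- b$Ejl*y3 - b7*y2 + c$Eil*x2 + n*z8 = - 2*x2*y3*z4*z8)" using E unfolding GE hb .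
    hence S: "b$Ei = (2*y3*z8^2*Q - z4*R)/(2*y3*(z4^2+z8^2)) \<and> b$Ej = 2*x2*(y2*y3+z2*z3) - b7*z4/z8 \<and> b$Ekl = 0 \<and> b$Ejl = -(z8*R + 2*y3*z4*z8*Q)/(2*y3*(z4^2+z8^2)) \<and> b$El = 2*x2*z2*z8 \<and> a$E1 = (- b1*z2 - b$Ej*z4 + b4*z3 + b7*z8 - m*y2)/x2 \<and> a$Ei = (b$Ei*z2 + b$Ej*z3 + b4*z4 + b$El*z8)/x2 \<and> a$Ej = (- b1*z4 - b$Ei*z3 + b$Ej*z2 + b$Ekl*z8)/x2 \<and> a$Ek = (b1*z3 - b$Ei*z4 + b4*z2 - b$Ejl*z8 + m*y3)/x2 \<and> a$Ekl = (- b$Ej*z8 + b$Ekl*z2 - b7*z4 + b$El*z3 + 2*x2*y2*y3*z8)/x2 \<and> a$Ejl = (b4*z8 + b$Ejl*z2 - b7*z3 - b$El*z4)/x2 \<and> a$Eil = (b1*z8 + b$Ekl*z4 + b$Ejl*z3 + b7*z2)/x2 \<and> a$El = (- b$Ei*z8 - b$Ekl*z3 + b$Ejl*z4 + b$El*z2 - 2*x2*y3^2*z8)/x2 \<and> c$E1 = (- b1*y2 - b4*y3 - n*z2)/x2 \<and> c$Ei = (b$Ei*y2 + b$Ej*y3)/x2 \<and> c$Ej = (- b$Ei*y3 + b$Ej*y2 + n*z4 - 2*x2*y3*z8^2)/x2 \<and> c$Ek = (- b1*y3 + b4*y2 - n*z3)/x2 \<and> c$Ekl = (b$Ekl*y2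 + b$El*y3 - 2*x2*y3*z2*z8)/x2 \<and> c$Ejl = (b$Ejl*y2 - b7*y3)/x2 \<and> c$Eil = (b$Ejl*y3 + b7*y2 - n*z8 - 2*x2*y3*z4*z8)/x2 \<and> c$El = (- b$Ekl*y3 + b$El*y2 + 2*x2*y3*z3*z8)/x2" using GR by blast
    have hA: "a = mkoct ((- b1*z2 - (2*x2*(y2*y3+z2*z3) - b7*z4/z8)*z4 + b4*z3 + b7*z8 - m*y2)/x2) ((((2*y3*z8^2*Q - z4*R)/(2*y3*(z4^2+z8^2)))*z2 + (2*x2*(y2*y3+z2*z3) - b7*z4/z8)*z3 + b4*z4 + (2*x2*z2*z8)*z8)/x2) ((- b1*z4 - ((2*y3*z8^2*Q - z4*R)/(2*y3*(z4^2+z8^2)))*z3 + (2*x2*(y2*y3+z2*z3) - b7*z4/z8)*z2 + 0*z8)/x2) ((b1*z3 - ((2*y3*z8^2*Q - z4*R)/(2*y3*(z4^2+z8^2)))*z4 + b4*z2 - (-(z8*R + 2*y3*z4*z8*Q)/(2*y3*(z4^2+z8^2)))*z8 + m*y3)/x2) ((- (2*x2*(y2*y3+z2*z3) - b7*z4/z8)*z8 + 0*z2 - b7*z4 + (2*x2*z2*z8)*z3 + 2*x2*y2*y3*z8)/x2) ((b4*z8 + (-(z8*R + 2*y3*z4*z8*Q)/(2*y3*(z4^2+z8^2)))*z2 - b7*z3 - (2*x2*z2*z8)*z4)/x2) ((b1*z8 + 0*z4 + (-(z8*R + 2*y3*z4*z8*Q)/(2*y3*(z4^2+z8^2)))*z3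 + b7*z2)/x2) ((- ((2*y3*z8^2*Q - z4*R)/(2*y3*(z4^2+z8^2)))*z8 - 0*z3 + (-(z8*R + 2*y3*z4*z8*Q)/(2*y3*(z4^2+z8^2)))*z4 + (2*x2*z2*z8)*z2 - 2*x2*y3^2*z8)/x2)" unfolding oct_eq_iff mkoct_comp by (simp only: S hb)
    have hB: "b = mkoct (b1) (((2*y3*z8^2*Q - z4*R)/(2*y3*(z4^2+z8^2)))) ((2*x2*(y2*y3+z2*z3) - b7*z4/z8)) (b4) (0) ((-(z8*R + 2*y3*z4*z8*Q)/(2*y3*(z4^2+z8^2)))) (b7) ((2*x2*z2*z8))" unfolding oct_eq_iff mkoct_comp by (simp only: S hb)
    have hC: "c = mkoct ((- b1*y2 - b4*y3 - n*z2)/x2) ((((2*y3*z8^2*Q - z4*R)/(2*y3*(z4^2+z8^2)))*y2 + (2*x2*(y2*y3+z2*z3) - b7*z4/z8)*y3)/x2) ((- ((2*y3*z8^2*Q - z4*R)/(2*y3*(z4^2+z8^2)))*y3 + (2*x2*(y2*y3+z2*z3) - b7*z4/z8)*y2 + n*z4 - 2*x2*y3*z8^2)/x2) ((- b1*y3 + b4*y2 - n*z3)/x2) ((0*y2 + (2*x2*z2*z8)*y3 - 2*x2*y3*z2*z8)/x2) (((-(z8*R + 2*y3*z4*z8*Q)/(2*y3*(z4^2+z8^2)))*y2 - b7*y3)/x2) (((-(z8*R + 2*y3*z4*z8*Q)/(2*y3*(z4^2+z8^2)))*y3 + b7*y2 - n*z8 - 2*x2*y3*z4*z8)/x2) ((-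 0*y3 + (2*x2*z2*z8)*y2 + 2*x2*y3*z3*z8)/x2)" unfolding oct_eq_iff mkoct_comp by (simp only: S hb)
    show "(p',m',n',a,b,c) = (p,m,n,mkoct ((- b1*z2 - (2*x2*(y2*y3+z2*z3) - b7*z4/z8)*z4 + b4*z3 + b7*z8 - m*y2)/x2) ((((2*y3*z8^2*Q - z4*R)/(2*y3*(z4^2+z8^2)))*z2 + (2*x2*(y2*y3+z2*z3) - b7*z4/z8)*z3 + b4*z4 + (2*x2*z2*z8)*z8)/x2) ((- b1*z4 - ((2*y3*z8^2*Q - z4*R)/(2*y3*(z4^2+z8^2)))*z3 + (2*x2*(y2*y3+z2*z3) - b7*z4/z8)*z2 + 0*z8)/x2) ((b1*z3 - ((2*y3*z8^2*Q - z4*R)/(2*y3*(z4^2+z8^2)))*z4 + b4*z2 - (-(z8*R + 2*y3*z4*z8*Q)/(2*y3*(z4^2+z8^2)))*z8 + m*y3)/x2) ((- (2*x2*(y2*y3+z2*z3) - b7*z4/z8)*z8 + 0*z2 - b7*z4 + (2*x2*z2*z8)*z3 + 2*x2*y2*y3*z8)/x2) ((b4*z8 + (-(z8*R + 2*y3*z4*z8*Q)/(2*y3*(z4^2+z8^2)))*z2 - b7*z3 - (2*x2*z2*z8)*z4)/x2) ((b1*z8 + 0*z4 + (-(z8*R + 2*y3*z4*z8*Q)/(2*y3*(z4^2+z8^2)))*z3 + b7*z2)/x2) ((- ((2*y3*z8^2*Q - z4*R)/(2*y3*(z4^2+z8^2)))*z8 - 0*z3 + (-(z8*R + 2*y3*z4*z8*Q)/(2*y3*(z4^2+z8^2)))*z4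 + (2*x2*z2*z8)*z2 - 2*x2*y3^2*z8)/x2), mkoct (b1) (((2*y3*z8^2*Q - z4*R)/(2*y3*(z4^2+z8^2)))) ((2*x2*(y2*y3+z2*z3) - b7*z4/z8)) (b4) (0) ((-(z8*R + 2*y3*z4*z8*Q)/(2*y3*(z4^2+z8^2)))) (b7) ((2*x2*z2*z8)), mkoct ((- b1*y2 - b4*y3 - n*z2)/x2) ((((2*y3*z8^2*Q - z4*R)/(2*y3*(z4^2+z8^2)))*y2 + (2*x2*(y2*y3+z2*z3) - b7*z4/z8)*y3)/x2) ((- ((2*y3*z8^2*Q - z4*R)/(2*y3*(z4^2+z8^2)))*y3 + (2*x2*(y2*y3+z2*z3) - b7*z4/z8)*y2 + n*z4 - 2*x2*y3*z8^2)/x2) ((- b1*y3 + b4*y2 - n*z3)/x2) ((0*y2 + (2*x2*z2*z8)*y3 - 2*x2*y3*z2*z8)/x2) (((-(z8*R + 2*y3*z4*z8*Q)/(2*y3*(z4^2+z8^2)))*y2 - b7*y3)/x2) (((-(z8*R + 2*y3*z4*z8*Q)/(2*y3*(z4^2+z8^2)))*y3 + b7*y2 - n*z8 - 2*x2*y3*z4*z8)/x2) ((- 0*y3 + (2*x2*z2*z8)*y2 + 2*x2*y3*z3*z8)/x2))" using hA hB hC hp by simp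
  next
    assume "(p',m',n',a,b,c) = (p,m,n,mkoct ((- b1*z2 - (2*x2*(y2*y3+z2*z3) - b7*z4/z8)*z4 + b4*z3 + b7*z8 - m*y2)/x2) ((((2*y3*z8^2*Q - z4*R)/(2*y3*(z4^2+z8^2)))*z2 + (2*x2*(y2*y3+z2*z3) - b7*z4/z8)*z3 + b4*z4 + (2*x2*z2*z8)*z8)/x2) ((- b1*z4 - ((2*y3*z8^2*Q - z4*R)/(2*y3*(z4^2+z8^2)))*z3 + (2*x2*(y2*y3+z2*z3) - b7*z4/z8)*z2 + 0*z8)/x2) ((b1*z3 - ((2*y3*z8^2*Q - z4*R)/(2*y3*(z4^2+z8^2)))*z4 + b4*z2 - (-(z8*R + 2*y3*z4*z8*Q)/(2*y3*(z4^2+z8^2)))*z8 + m*y3)/x2) ((- (2*x2*(y2*y3+z2*z3) - b7*z4/z8)*z8 + 0*z2 - b7*z4 + (2*x2*z2*z8)*z3 + 2*x2*y2*y3*z8)/x2) ((b4*z8 + (-(z8*R + 2*y3*z4*z8*Q)/(2*y3*(z4^2+z8^2)))*z2 - b7*z3 - (2*x2*z2*z8)*z4)/x2) ((b1*z8 + 0*z4 + (-(z8*R + 2*y3*z4*z8*Q)/(2*y3*(z4^2+z8^2)))*z3 + b7*z2)/x2) ((- ((2*y3*z8^2*Q - z4*R)/(2*y3*(z4^2+z8^2)))*z8 - 0*z3 + (-(z8*R + 2*y3*z4*z8*Q)/(2*y3*(z4^2+z8^2)))*z4 + (2*x2*z2*z8)*z2 - 2*x2*y3^2*z8)/x2), mkoct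 (b1) (((2*y3*z8^2*Q - z4*R)/(2*y3*(z4^2+z8^2)))) ((2*x2*(y2*y3+z2*z3) - b7*z4/z8)) (b4) (0) ((-(z8*R + 2*y3*z4*z8*Q)/(2*y3*(z4^2+z8^2)))) (b7) ((2*x2*z2*z8)), mkoct ((- b1*y2 - b4*y3 - n*z2)/x2) ((((2*y3*z8^2*Q - z4*R)/(2*y3*(z4^2+z8^2)))*y2 + (2*x2*(y2*y3+z2*z3) - b7*z4/z8)*y3)/x2) ((- ((2*y3*z8^2*Q - z4*R)/(2*y3*(z4^2+z8^2)))*y3 + (2*x2*(y2*y3+z2*z3) - b7*z4/z8)*y2 + n*z4 - 2*x2*y3*z8^2)/x2) ((- b1*y3 + b4*y2 - n*z3)/x2) ((0*y2 + (2*x2*z2*z8)*y3 - 2*x2*y3*z2*z8)/x2) (((-(z8*R + 2*y3*z4*z8*Q)/(2*y3*(z4^2+z8^2)))*y2 - b7*y3)/x2) (((-(z8*R + 2*y3*z4*z8*Q)/(2*y3*(z4^2+z8^2)))*y3 + b7*y2 - n*z8 - 2*x2*y3*z4*z8)/x2) ((- 0*y3 + (2*x2*z2*z8)*y2 + 2*x2*y3*z3*z8)/x2))"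
    hence hp: "p' = p" "m' = m" "n' = n" and ha: "a = mkoct ((- b1*z2 - (2*x2*(y2*y3+z2*z3) - b7*z4/z8)*z4 + b4*z3 + b7*z8 - m*y2)/x2) ((((2*y3*z8^2*Q - z4*R)/(2*y3*(z4^2+z8^2)))*z2 + (2*x2*(y2*y3+z2*z3) - b7*z4/z8)*z3 + b4*z4 + (2*x2*z2*z8)*z8)/x2) ((- b1*z4 - ((2*y3*z8^2*Q - z4*R)/(2*y3*(z4^2+z8^2)))*z3 + (2*x2*(y2*y3+z2*z3) - b7*z4/z8)*z2 + 0*z8)/x2) ((b1*z3 - ((2*y3*z8^2*Q - z4*R)/(2*y3*(z4^2+z8^2)))*z4 + b4*z2 - (-(z8*R + 2*y3*z4*z8*Q)/(2*y3*(z4^2+z8^2)))*z8 + m*y3)/x2) ((- (2*x2*(y2*y3+z2*z3) - b7*z4/z8)*z8 + 0*z2 - b7*z4 + (2*x2*z2*z8)*z3 + 2*x2*y2*y3*z8)/x2) ((b4*z8 + (-(z8*R + 2*y3*z4*z8*Q)/(2*y3*(z4^2+z8^2)))*z2 - b7*z3 - (2*x2*z2*z8)*z4)/x2) ((b1*z8 + 0*z4 + (-(z8*R + 2*y3*z4*z8*Q)/(2*y3*(z4^2+z8^2)))*z3 + b7*z2)/x2) ((- ((2*y3*z8^2*Q - z4*R)/(2*y3*(z4^2+z8^2)))*z8 - 0*z3 + (-(z8*R + 2*y3*z4*z8*Q)/(2*y3*(z4^2+z8^2)))*z4 + (2*x2*z2*z8)*z2 - 2*x2*y3^2*z8)/x2)"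 and hb: "b = mkoct (b1) (((2*y3*z8^2*Q - z4*R)/(2*y3*(z4^2+z8^2)))) ((2*x2*(y2*y3+z2*z3) - b7*z4/z8)) (b4) (0) ((-(z8*R + 2*y3*z4*z8*Q)/(2*y3*(z4^2+z8^2)))) (b7) ((2*x2*z2*z8))" and hc: "c = mkoct ((- b1*y2 - b4*y3 - n*z2)/x2) ((((2*y3*z8^2*Q - z4*R)/(2*y3*(z4^2+z8^2)))*y2 + (2*x2*(y2*y3+z2*z3) - b7*z4/z8)*y3)/x2) ((- ((2*y3*z8^2*Q - z4*R)/(2*y3*(z4^2+z8^2)))*y3 + (2*x2*(y2*y3+z2*z3) - b7*z4/z8)*y2 + n*z4 - 2*x2*y3*z8^2)/x2) ((- b1*y3 + b4*y2 - n*z3)/x2) ((0*y2 + (2*x2*z2*z8)*y3 - 2*x2*y3*z2*z8)/x2) (((-(z8*R + 2*y3*z4*z8*Q)/(2*y3*(z4^2+z8^2)))*y2 - b7*y3)/x2) (((-(z8*R + 2*y3*z4*z8*Q)/(2*y3*(z4^2+z8^2)))*y3 + b7*y2 - n*z8 - 2*x2*y3*z4*z8)/x2) ((- 0*y3 + (2*x2*z2*z8)*y2 + 2*x2*y3*z3*z8)/x2)" by auto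
    have S: "b$Ei = (2*y3*z8^2*Q - z4*R)/(2*y3*(z4^2+z8^2)) \<and> b$Ej = 2*x2*(y2*y3+z2*z3) - b7*z4/z8 \<and> b$Ekl = 0 \<and> b$Ejl = -(z8*R + 2*y3*z4*z8*Q)/(2*y3*(z4^2+z8^2)) \<and> b$El = 2*x2*z2*z8 \<and> a$E1 = (- b1*z2 - b$Ej*z4 + b4*z3 + b7*z8 - m*y2)/x2 \<and> a$Ei = (b$Ei*z2 + b$Ej*z3 + b4*z4 + b$El*z8)/x2 \<and> a$Ej = (- b1*z4 - b$Ei*z3 + b$Ej*z2 + b$Ekl*z8)/x2 \<and> a$Ek = (b1*z3 - b$Ei*z4 + b4*z2 - b$Ejl*z8 + m*y3)/x2 \<and> a$Ekl = (- b$Ej*z8 + b$Ekl*z2 - b7*z4 + b$El*z3 + 2*x2*y2*y3*z8)/x2 \<and> a$Ejl = (b4*z8 + b$Ejl*z2 - b7*z3 - b$El*z4)/x2 \<and> a$Eil = (b1*z8 + b$Ekl*z4 + b$Ejl*z3 + b7*z2)/x2 \<and> a$El = (- b$Ei*z8 - b$Ekl*z3 + b$Ejl*z4 + b$El*z2 - 2*x2*y3^2*z8)/x2 \<and> c$E1 = (- b1*y2 - b4*y3 - n*z2)/x2 \<and> c$Ei = (b$Ei*y2 + b$Ej*y3)/x2 \<and> c$Ej = (- b$Ei*y3 + b$Ej*y2 + n*z4 - 2*x2*y3*z8^2)/x2 \<and> c$Ek = (- b1*y3 + b4*y2 - n*z3)/x2 \<and> c$Ekl = (b$Ekl*y2 +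 b$El*y3 - 2*x2*y3*z2*z8)/x2 \<and> c$Ejl = (b$Ejl*y2 - b7*y3)/x2 \<and> c$Eil = (b$Ejl*y3 + b7*y2 - n*z8 - 2*x2*y3*z4*z8)/x2 \<and> c$El = (- b$Ekl*y3 + b$El*y2 + 2*x2*y3*z3*z8)/x2" unfolding ha hb hc by simp
    hence "(- a$Ei*y2 - a$Ej*y3 + c$Ei*z2 + c$Ej*z3 + c$Ek*z4 + c$El*z8 = 0) \<and>     (a$E1*y2 - a$Ek*y3 + c$E1*z2 - c$Ej*z4 + c$Ek*z3 + c$Eil*z8 + p*x2 = 0) \<and>     (a$E1*y3 + a$Ek*y2 + c$E1*z3 + c$Ei*z4 - c$Ek*z2 + c$Ejl*z8 = 0) \<and>     (a$Ei*y3 - a$Ej*y2 + c$E1*z4 - c$Ei*z3 + c$Ej*z2 + c$Ekl*z8 = 0) \<and>     (a$Ejl*y2 - a$Eil*y3 - c$Ek*z8 - c$Ejl*z2 + c$Eil*z3 + c$El*z4 = 0) \<and>     (- a$Ekl*y2 - a$El*y3 - c$Ej*z8 + c$Ekl*z2 - c$Eil*z4 + c$El*z3 = 2*x2^2*y3*z8) \<and>     (a$Ekl*y3 - a$El*y2 - c$Ei*z8 - c$Ekl*z3 + c$Ejl*z4 + c$El*z2 = 0) \<and>     (a$Ejl*y3 + a$Eil*y2 + c$E1*z8 - c$Ekl*z4 - c$Ejl*z3 - c$Eil*z2 = 0) \<and>     (a$Ei*x2 - b$Ei*z2 - b$Ej*z3 - b4*z4 - b$El*z8 = 0) \<and>     (a$E1*x2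 + b1*z2 + b$Ej*z4 - b4*z3 - b7*z8 + m*y2 = 0) \<and>     (- a$Ek*x2 + b1*z3 - b$Ei*z4 + b4*z2 - b$Ejl*z8 + m*y3 = 0) \<and>     (a$Ej*x2 + b1*z4 + b$Ei*z3 - b$Ej*z2 - b$Ekl*z8 = 0) \<and>     (- a$Ejl*x2 + b4*z8 + b$Ejl*z2 - b7*z3 - b$El*z4 = 0) \<and>     (a$Ekl*x2 + b$Ej*z8 - b$Ekl*z2 + b7*z4 - b$El*z3 = 2*x2*y2*y3*z8) \<and>     (a$El*x2 + b$Ei*z8 + b$Ekl*z3 - b$Ejl*z4 - b$El*z2 = - 2*x2*y3^2*z8) \<and>     (- a$Eil*x2 + b1*z8 + b$Ekl*z4 + b$Ejl*z3 + b7*z2 = 0) \<and>     (b$Ei*y2 + b$Ej*y3 - c$Ei*x2 = 0) \<and>     (b1*y2 + b4*y3 + c$E1*x2 + n*z2 = 0) \<and>     (b1*y3 - b4*y2 + c$Ek*x2 + n*z3 = 0) \<and>     (- b$Ei*y3 + b$Ej*y2 - c$Ej*x2 + n*z4 = 2*x2*y3*z8^2) \<and>     (- b$Ejl*y2 + b7*y3 + c$Ejl*x2 = 0) \<and>     (b$Ekl*y2 + b$El*y3 - c$Ekl*x2 = 2*x2*y3*z2*z8) \<and>     (- b$Ekl*y3 + b$El*y2 - c$El*x2 = - 2*x2*y3*z3*z8) \<and>     (- b$Ejl*y3 - b7*y2 + c$Eil*x2 + n*z8 = - 2*x2*y3*z4*z8)" using GR by blast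
    hence "eigen_eq (p,m,n,a,b,c) x y z" unfolding GE using hb by simp
    thus "eigen_eq (p',m',n',a,b,c) x y z \<and> p' = p \<and> m' = m \<and> n' = n \<and> b$E1 = b1 \<and> b$Ek = b4 \<and> b$Eil = b7" using hp hb by simp
  qed
qed


lemma aff_dim_by_proj:
  fixes S :: "'a::euclidean_space set" and f :: "'a \<Rightarrow> 'b::euclidean_space"
  assumes aS: "affine S" and lf: "linear f" and inj: "inj_on f S" and surj: "f ` S = UNIV"
  shows "aff_dim S = DIM('b)"
proof -
  obtain a where aS0: "a \<in> S" using surj by (metis UNIV_I imageE)
  define V where "V = (\<lambda>x. x - a) ` S"
  have sV: "subspace V" unfolding V_def using affine_diffs_subspace_subtract[OF aS aS0] .
  have "aff_dim S = aff_dim V" unfolding V_def by (simp add: aff_dim_translation_eq_subtract)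
  also have "\<dots> = int (dim V)" using aff_dim_subspace[OF sV] .
  also have "dim V = dim (f ` V)"
  proof (rule dim_image_eq[symmetric, OF lf])
    show "inj_on f (span V)" unfolding span_eq_iff[THEN iffD2, OF sV]
    proof (rule inj_onI)
      fix u v assume "u \<in> V" "v \<in> V" and e: "f u = f v"
      then obtain x y where x: "x \<in> S" "u = x - a" and y: "y \<in> S" "v = y - a" unfolding V_def by auto
      have "f x = f y" using e x y linear_diff[OF lf] by simp
      hence "x = y" using inj x y by (meson inj_onD)
      thus "u = v" using x y by simp
    qed
  qed
  also have "f ` V = UNIV"
  proof -
    { fix t
      obtain x where x: "x \<in> S" "f x = t + f a" using surj by (metis UNIV_I imageE)
      have "t = f (x - a)" using x linear_diff[OF lf] by simp
      hence "t \<in> f ` V" unfolding V_def using x by auto }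
    thus ?thesis by auto
  qed
  finally show ?thesis by simp
qed

lemma nz_of_assoc: assumes g: "genf x y z" and as: "assoc x y z \<noteq> 0"
  shows "x$Ei \<noteq> 0" "y$Ej \<noteq> 0" "z$El \<noteq> 0"
proof -
  have "2 * x$Ei * y$Ej * z$El \<noteq> 0"
  proof
    assume "2 * x$Ei * y$Ej * z$El = 0"
    hence "assoc x y z = 0" unfolding assoc_gen[OF g] by (simp add: oct_eq_iff)
    thus False using as by simp
  qed
  thus "x$Ei \<noteq> 0" "y$Ej \<noteq> 0" "z$El \<noteq> 0" by auto
qed

lemma gen_ex1: assumes g: "genf x y z" and as: "assoc x y z \<noteq> 0"
  shows "\<exists>!A. A \<in> hsol x y z \<and> (case A of (p', m', n', a, b, c) \<Rightarrow> p' = p \<and> m' = m \<and> n' = n \<and> b $ E1 = b1 \<and> b $ Ek = b4 \<and> b $ Eil = b7)"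
proof -
  define x2 where "x2 = x$Ei"
  define y2 where "y2 = y$Ei"
  define y3 where "y3 = y$Ej"
  define z2 where "z2 = z$Ei"
  define z3 where "z3 = z$Ej"
  define z4 where "z4 = z$Ek"
  define z8 where "z8 = z$El"
  have hx: "x$Ei = x2" "y$Ei = y2" "y$Ej = y3" "z$Ei = z2" "z$Ej = z3" "z$Ek = z4" "z$El = z8" by (simp_all add: x2_def y2_def y3_def z2_def z3_def z4_def z8_def)
  have nz: "x2 \<noteq> 0" "y3 \<noteq> 0" "z8 \<noteq> 0" using nz_of_assoc[OF g as] hx by simp_all
  define Q where "Q = x2*(y2^2+z2^2+x2^2-z3^2-z4^2-z8^2-y3^2)"
  define R where "R = -2*b1*y2*z2 - 2*b1*y3*z3 - 2*(2*x2*(y2*y3+z2*z3) - b7*z4/z8)*y2*z4 + 2*b4*y2*z3 - 2*b4*y3*z2 + 2*b7*y2*z8 - m*y2^2 - m*y3^2 - n*(z2^2+z3^2+z4^2+z8^2) + p*x2^2"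
  note GC = gen_char[OF g hx nz Q_def R_def]
  show ?thesis
  proof (rule ex1I[of _ "(p,m,n,mkoct ((- b1*z2 - (2*x2*(y2*y3+z2*z3) - b7*z4/z8)*z4 + b4*z3 + b7*z8 - m*y2)/x2) ((((2*y3*z8^2*Q - z4*R)/(2*y3*(z4^2+z8^2)))*z2 + (2*x2*(y2*y3+z2*z3) - b7*z4/z8)*z3 + b4*z4 + (2*x2*z2*z8)*z8)/x2) ((- b1*z4 - ((2*y3*z8^2*Q - z4*R)/(2*y3*(z4^2+z8^2)))*z3 + (2*x2*(y2*y3+z2*z3) - b7*z4/z8)*z2 + 0*z8)/x2) ((b1*z3 - ((2*y3*z8^2*Q - z4*R)/(2*y3*(z4^2+z8^2)))*z4 + b4*z2 - (-(z8*R + 2*y3*z4*z8*Q)/(2*y3*(z4^2+z8^2)))*z8 + m*y3)/x2) ((- (2*x2*(y2*y3+z2*z3) - b7*z4/z8)*z8 + 0*z2 - b7*z4 + (2*x2*z2*z8)*z3 + 2*x2*y2*y3*z8)/x2) ((b4*z8 + (-(z8*R + 2*y3*z4*z8*Q)/(2*y3*(z4^2+z8^2)))*z2 - b7*z3 - (2*x2*z2*z8)*z4)/x2) ((b1*z8 + 0*z4 + (-(z8*R + 2*y3*z4*z8*Q)/(2*y3*(z4^2+z8^2)))*z3 + b7*z2)/x2) ((- ((2*y3*z8^2*Q - z4*R)/(2*y3*(z4^2+z8^2)))*z8 - 0*z3 + (-(z8*R + 2*y3*z4*z8*Q)/(2*y3*(z4^2+z8^2)))*z4 + (2*x2*z2*z8)*z2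 - 2*x2*y3^2*z8)/x2),mkoct (b1) (((2*y3*z8^2*Q - z4*R)/(2*y3*(z4^2+z8^2)))) ((2*x2*(y2*y3+z2*z3) - b7*z4/z8)) (b4) (0) ((-(z8*R + 2*y3*z4*z8*Q)/(2*y3*(z4^2+z8^2)))) (b7) ((2*x2*z2*z8)),mkoct ((- b1*y2 - b4*y3 - n*z2)/x2) ((((2*y3*z8^2*Q - z4*R)/(2*y3*(z4^2+z8^2)))*y2 + (2*x2*(y2*y3+z2*z3) - b7*z4/z8)*y3)/x2) ((- ((2*y3*z8^2*Q - z4*R)/(2*y3*(z4^2+z8^2)))*y3 + (2*x2*(y2*y3+z2*z3) - b7*z4/z8)*y2 + n*z4 - 2*x2*y3*z8^2)/x2) ((- b1*y3 + b4*y2 - n*z3)/x2) ((0*y2 + (2*x2*z2*z8)*y3 - 2*x2*y3*z2*z8)/x2) (((-(z8*R + 2*y3*z4*z8*Q)/(2*y3*(z4^2+z8^2)))*y2 - b7*y3)/x2) (((-(z8*R + 2*y3*z4*z8*Q)/(2*y3*(z4^2+z8^2)))*y3 + b7*y2 - n*z8 - 2*x2*y3*z4*z8)/x2) ((- 0*y3 + (2*x2*z2*z8)*y2 + 2*x2*y3*z3*z8)/x2))"])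
    show "(p,m,n,mkoct ((- b1*z2 - (2*x2*(y2*y3+z2*z3) - b7*z4/z8)*z4 + b4*z3 + b7*z8 - m*y2)/x2) ((((2*y3*z8^2*Q - z4*R)/(2*y3*(z4^2+z8^2)))*z2 + (2*x2*(y2*y3+z2*z3) - b7*z4/z8)*z3 + b4*z4 + (2*x2*z2*z8)*z8)/x2) ((- b1*z4 - ((2*y3*z8^2*Q - z4*R)/(2*y3*(z4^2+z8^2)))*z3 + (2*x2*(y2*y3+z2*z3) - b7*z4/z8)*z2 + 0*z8)/x2) ((b1*z3 - ((2*y3*z8^2*Q - z4*R)/(2*y3*(z4^2+z8^2)))*z4 + b4*z2 - (-(z8*R + 2*y3*z4*z8*Q)/(2*y3*(z4^2+z8^2)))*z8 + m*y3)/x2) ((- (2*x2*(y2*y3+z2*z3) - b7*z4/z8)*z8 + 0*z2 - b7*z4 + (2*x2*z2*z8)*z3 + 2*x2*y2*y3*z8)/x2) ((b4*z8 + (-(z8*R + 2*y3*z4*z8*Q)/(2*y3*(z4^2+z8^2)))*z2 - b7*z3 - (2*x2*z2*z8)*z4)/x2) ((b1*z8 + 0*z4 + (-(z8*R + 2*y3*z4*z8*Q)/(2*y3*(z4^2+z8^2)))*z3 + b7*z2)/x2) ((- ((2*y3*z8^2*Q - z4*R)/(2*y3*(z4^2+z8^2)))*z8 - 0*z3 + (-(z8*R + 2*y3*z4*z8*Q)/(2*y3*(z4^2+z8^2)))*z4 + (2*x2*z2*z8)*z2 - 2*x2*y3^2*z8)/x2),mkoct (b1) (((2*y3*z8^2*Q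 - z4*R)/(2*y3*(z4^2+z8^2)))) ((2*x2*(y2*y3+z2*z3) - b7*z4/z8)) (b4) (0) ((-(z8*R + 2*y3*z4*z8*Q)/(2*y3*(z4^2+z8^2)))) (b7) ((2*x2*z2*z8)),mkoct ((- b1*y2 - b4*y3 - n*z2)/x2) ((((2*y3*z8^2*Q - z4*R)/(2*y3*(z4^2+z8^2)))*y2 + (2*x2*(y2*y3+z2*z3) - b7*z4/z8)*y3)/x2) ((- ((2*y3*z8^2*Q - z4*R)/(2*y3*(z4^2+z8^2)))*y3 + (2*x2*(y2*y3+z2*z3) - b7*z4/z8)*y2 + n*z4 - 2*x2*y3*z8^2)/x2) ((- b1*y3 + b4*y2 - n*z3)/x2) ((0*y2 + (2*x2*z2*z8)*y3 - 2*x2*y3*z2*z8)/x2) (((-(z8*R + 2*y3*z4*z8*Q)/(2*y3*(z4^2+z8^2)))*y2 - b7*y3)/x2) (((-(z8*R + 2*y3*z4*z8*Q)/(2*y3*(z4^2+z8^2)))*y3 + b7*y2 - n*z8 - 2*x2*y3*z4*z8)/x2) ((- 0*y3 + (2*x2*z2*z8)*y2 + 2*x2*y3*z3*z8)/x2)) \<in> hsol x y z \<and> (case (p,m,n,mkoct ((- b1*z2 - (2*x2*(y2*y3+z2*z3) - b7*z4/z8)*z4 + b4*z3 + b7*z8 - m*y2)/x2) ((((2*y3*z8^2*Q - z4*R)/(2*y3*(z4^2+z8^2)))*z2 + (2*x2*(y2*y3+z2*z3) - b7*z4/z8)*z3 + b4*z4 + (2*x2*z2*z8)*z8)/x2) ((-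 b1*z4 - ((2*y3*z8^2*Q - z4*R)/(2*y3*(z4^2+z8^2)))*z3 + (2*x2*(y2*y3+z2*z3) - b7*z4/z8)*z2 + 0*z8)/x2) ((b1*z3 - ((2*y3*z8^2*Q - z4*R)/(2*y3*(z4^2+z8^2)))*z4 + b4*z2 - (-(z8*R + 2*y3*z4*z8*Q)/(2*y3*(z4^2+z8^2)))*z8 + m*y3)/x2) ((- (2*x2*(y2*y3+z2*z3) - b7*z4/z8)*z8 + 0*z2 - b7*z4 + (2*x2*z2*z8)*z3 + 2*x2*y2*y3*z8)/x2) ((b4*z8 + (-(z8*R + 2*y3*z4*z8*Q)/(2*y3*(z4^2+z8^2)))*z2 - b7*z3 - (2*x2*z2*z8)*z4)/x2) ((b1*z8 + 0*z4 + (-(z8*R + 2*y3*z4*z8*Q)/(2*y3*(z4^2+z8^2)))*z3 + b7*z2)/x2) ((- ((2*y3*z8^2*Q - z4*R)/(2*y3*(z4^2+z8^2)))*z8 - 0*z3 + (-(z8*R + 2*y3*z4*z8*Q)/(2*y3*(z4^2+z8^2)))*z4 + (2*x2*z2*z8)*z2 - 2*x2*y3^2*z8)/x2),mkoct (b1) (((2*y3*z8^2*Q - z4*R)/(2*y3*(z4^2+z8^2)))) ((2*x2*(y2*y3+z2*z3) - b7*z4/z8)) (b4) (0) ((-(z8*R + 2*y3*z4*z8*Q)/(2*y3*(z4^2+z8^2)))) (b7) ((2*x2*z2*z8)),mkoct ((- b1*y2 - b4*y3 - n*z2)/x2) ((((2*y3*z8^2*Q - z4*R)/(2*y3*(z4^2+z8^2)))*y2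 + (2*x2*(y2*y3+z2*z3) - b7*z4/z8)*y3)/x2) ((- ((2*y3*z8^2*Q - z4*R)/(2*y3*(z4^2+z8^2)))*y3 + (2*x2*(y2*y3+z2*z3) - b7*z4/z8)*y2 + n*z4 - 2*x2*y3*z8^2)/x2) ((- b1*y3 + b4*y2 - n*z3)/x2) ((0*y2 + (2*x2*z2*z8)*y3 - 2*x2*y3*z2*z8)/x2) (((-(z8*R + 2*y3*z4*z8*Q)/(2*y3*(z4^2+z8^2)))*y2 - b7*y3)/x2) (((-(z8*R + 2*y3*z4*z8*Q)/(2*y3*(z4^2+z8^2)))*y3 + b7*y2 - n*z8 - 2*x2*y3*z4*z8)/x2) ((- 0*y3 + (2*x2*z2*z8)*y2 + 2*x2*y3*z3*z8)/x2)) of (p', m', n', a, b, c) \<Rightarrow> p' = p \<and> m' = m \<and> n' = n \<and> b $ E1 = b1 \<and> b $ Ek = b4 \<and> b $ Eil = b7)"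
      using GC[where ?p'=p and ?m'=m and ?n'=n and ?a="mkoct ((- b1*z2 - (2*x2*(y2*y3+z2*z3) - b7*z4/z8)*z4 + b4*z3 + b7*z8 - m*y2)/x2) ((((2*y3*z8^2*Q - z4*R)/(2*y3*(z4^2+z8^2)))*z2 + (2*x2*(y2*y3+z2*z3) - b7*z4/z8)*z3 + b4*z4 + (2*x2*z2*z8)*z8)/x2) ((- b1*z4 - ((2*y3*z8^2*Q - z4*R)/(2*y3*(z4^2+z8^2)))*z3 + (2*x2*(y2*y3+z2*z3) - b7*z4/z8)*z2 + 0*z8)/x2) ((b1*z3 - ((2*y3*z8^2*Q - z4*R)/(2*y3*(z4^2+z8^2)))*z4 + b4*z2 - (-(z8*R + 2*y3*z4*z8*Q)/(2*y3*(z4^2+z8^2)))*z8 + m*y3)/x2) ((- (2*x2*(y2*y3+z2*z3) - b7*z4/z8)*z8 + 0*z2 - b7*z4 + (2*x2*z2*z8)*z3 + 2*x2*y2*y3*z8)/x2) ((b4*z8 + (-(z8*R + 2*y3*z4*z8*Q)/(2*y3*(z4^2+z8^2)))*z2 - b7*z3 - (2*x2*z2*z8)*z4)/x2) ((b1*z8 + 0*z4 + (-(z8*R + 2*y3*z4*z8*Q)/(2*y3*(z4^2+z8^2)))*z3 + b7*z2)/x2) ((- ((2*y3*z8^2*Q - z4*R)/(2*y3*(z4^2+z8^2)))*z8 - 0*z3 + (-(z8*R + 2*y3*z4*z8*Q)/(2*y3*(z4^2+z8^2)))*z4 + (2*x2*z2*z8)*z2 - 2*x2*y3^2*z8)/x2)"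 and ?b="mkoct (b1) (((2*y3*z8^2*Q - z4*R)/(2*y3*(z4^2+z8^2)))) ((2*x2*(y2*y3+z2*z3) - b7*z4/z8)) (b4) (0) ((-(z8*R + 2*y3*z4*z8*Q)/(2*y3*(z4^2+z8^2)))) (b7) ((2*x2*z2*z8))" and ?c="mkoct ((- b1*y2 - b4*y3 - n*z2)/x2) ((((2*y3*z8^2*Q - z4*R)/(2*y3*(z4^2+z8^2)))*y2 + (2*x2*(y2*y3+z2*z3) - b7*z4/z8)*y3)/x2) ((- ((2*y3*z8^2*Q - z4*R)/(2*y3*(z4^2+z8^2)))*y3 + (2*x2*(y2*y3+z2*z3) - b7*z4/z8)*y2 + n*z4 - 2*x2*y3*z8^2)/x2) ((- b1*y3 + b4*y2 - n*z3)/x2) ((0*y2 + (2*x2*z2*z8)*y3 - 2*x2*y3*z2*z8)/x2) (((-(z8*R + 2*y3*z4*z8*Q)/(2*y3*(z4^2+z8^2)))*y2 - b7*y3)/x2) (((-(z8*R + 2*y3*z4*z8*Q)/(2*y3*(z4^2+z8^2)))*y3 + b7*y2 - n*z8 - 2*x2*y3*z4*z8)/x2) ((- 0*y3 + (2*x2*z2*z8)*y2 + 2*x2*y3*z3*z8)/x2)"] unfolding hsol_def by simp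
  next
    fix A assume H: "A \<in> hsol x y z \<and> (case A of (p', m', n', a, b, c) \<Rightarrow> p' = p \<and> m' = m \<and> n' = n \<and> b $ E1 = b1 \<and> b $ Ek = b4 \<and> b $ Eil = b7)"
    obtain p' m' n' a b c where Ad: "A = (p',m',n',a,b,c)" by (cases A) auto
    show "A = (p,m,n,mkoct ((- b1*z2 - (2*x2*(y2*y3+z2*z3) - b7*z4/z8)*z4 + b4*z3 + b7*z8 - m*y2)/x2) ((((2*y3*z8^2*Q - z4*R)/(2*y3*(z4^2+z8^2)))*z2 + (2*x2*(y2*y3+z2*z3) - b7*z4/z8)*z3 + b4*z4 + (2*x2*z2*z8)*z8)/x2) ((- b1*z4 - ((2*y3*z8^2*Q - z4*R)/(2*y3*(z4^2+z8^2)))*z3 + (2*x2*(y2*y3+z2*z3) - b7*z4/z8)*z2 + 0*z8)/x2) ((b1*z3 - ((2*y3*z8^2*Q - z4*R)/(2*y3*(z4^2+z8^2)))*z4 + b4*z2 - (-(z8*R + 2*y3*z4*z8*Q)/(2*y3*(z4^2+z8^2)))*z8 + m*y3)/x2) ((- (2*x2*(y2*y3+z2*z3) - b7*z4/z8)*z8 + 0*z2 - b7*z4 + (2*x2*z2*z8)*z3 + 2*x2*y2*y3*z8)/x2) ((b4*z8 + (-(z8*R + 2*y3*z4*z8*Q)/(2*y3*(z4^2+z8^2)))*z2 - b7*z3 - (2*x2*z2*z8)*z4)/x2) ((b1*z8 + 0*z4 + (-(z8*R + 2*y3*z4*z8*Q)/(2*y3*(z4^2+z8^2)))*z3 + b7*z2)/x2)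 ((- ((2*y3*z8^2*Q - z4*R)/(2*y3*(z4^2+z8^2)))*z8 - 0*z3 + (-(z8*R + 2*y3*z4*z8*Q)/(2*y3*(z4^2+z8^2)))*z4 + (2*x2*z2*z8)*z2 - 2*x2*y3^2*z8)/x2),mkoct (b1) (((2*y3*z8^2*Q - z4*R)/(2*y3*(z4^2+z8^2)))) ((2*x2*(y2*y3+z2*z3) - b7*z4/z8)) (b4) (0) ((-(z8*R + 2*y3*z4*z8*Q)/(2*y3*(z4^2+z8^2)))) (b7) ((2*x2*z2*z8)),mkoct ((- b1*y2 - b4*y3 - n*z2)/x2) ((((2*y3*z8^2*Q - z4*R)/(2*y3*(z4^2+z8^2)))*y2 + (2*x2*(y2*y3+z2*z3) - b7*z4/z8)*y3)/x2) ((- ((2*y3*z8^2*Q - z4*R)/(2*y3*(z4^2+z8^2)))*y3 + (2*x2*(y2*y3+z2*z3) - b7*z4/z8)*y2 + n*z4 - 2*x2*y3*z8^2)/x2) ((- b1*y3 + b4*y2 - n*z3)/x2) ((0*y2 + (2*x2*z2*z8)*y3 - 2*x2*y3*z2*z8)/x2) (((-(z8*R + 2*y3*z4*z8*Q)/(2*y3*(z4^2+z8^2)))*y2 - b7*y3)/x2) (((-(z8*R + 2*y3*z4*z8*Q)/(2*y3*(z4^2+z8^2)))*y3 + b7*y2 - n*z8 - 2*x2*y3*z4*z8)/x2) ((- 0*y3 + (2*x2*z2*z8)*y2 + 2*x2*y3*z3*z8)/x2))" using H GC[where ?p'=p' and ?m'=m' and ?n'=n' and ?a=a and ?b=b and ?c=c]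 unfolding Ad hsol_def by simp
  qed
qed

definition proj6 :: "real \<times> real \<times> real \<times> oct \<times> oct \<times> oct \<Rightarrow> real \<times> real \<times> real \<times> real \<times> real \<times> real" where
  "proj6 A = (case A of (p,m,n,a,b,c) \<Rightarrow> (p,m,n,b$E1,b$Ek,b$Eil))"

lemma linear_proj6: "linear proj6"
  unfolding linear_iff proj6_def by (auto split: prod.splits)

lemma gen_dim: assumes g: "genf x y z" and as: "assoc x y z \<noteq> 0"
  shows "hsol x y z \<noteq> {} \<and> aff_dim (hsol x y z) = 6"
proof -
  note E = gen_ex1[OF g as]
  have inj: "inj_on proj6 (hsol x y z)"
  proof (rule inj_onI)
    fix A B assume A: "A \<in> hsol x y z" and B: "B \<in> hsol x y z" and e: "proj6 A = proj6 B"
    obtain p m n a b c where Ad: "A = (p,m,n,a,b,c)" by (cases A) auto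
    obtain p' m' n' a' b' c' where Bd: "B = (p',m',n',a',b',c')" by (cases B) auto
    have e2: "p' = p" "m' = m" "n' = n" "b'$E1 = b$E1" "b'$Ek = b$Ek" "b'$Eil = b$Eil" using e unfolding Ad Bd proj6_def by auto
    show "A = B" using E[of p m n "b$E1" "b$Ek" "b$Eil"] A B e2 unfolding Ad Bd by auto
  qed
  have sur: "proj6 ` hsol x y z = UNIV"
  proof -
    { fix t :: "real \<times> real \<times> real \<times> real \<times> real \<times> real"
      obtain p m n b1 b4 b7 where t: "t = (p,m,n,b1,b4,b7)" by (cases t) auto
      obtain A where A: "A \<in> hsol x y z" "case A of (p', m', n', a, b, c) \<Rightarrow> p' = p \<and> m' = m \<and> n' = n \<and> b $ E1 = b1 \<and> b $ Ek = b4 \<and> b $ Eil = b7"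
        using E[of p m n b1 b4 b7] by auto
      have "proj6 A = t" using A(2) unfolding t proj6_def by (auto split: prod.splits)
      hence "t \<in> proj6 ` hsol x y z" using A(1) by auto }
    thus ?thesis by auto
  qed
  have "aff_dim (hsol x y z) = int DIM(real \<times> real \<times> real \<times> real \<times> real \<times> real)"
    by (rule aff_dim_by_proj[OF affine_hsol linear_proj6 inj sur])
  hence "aff_dim (hsol x y z) = 6" by simp
  moreover have "hsol x y z \<noteq> {}" using sur by auto
  ultimately show ?thesis by simp
qed


instantiation quat :: ring_1
begin
definition zero_quat_def: "0 = Q 0 0 0 0"
definition one_quat_def: "1 = Q 1 0 0 0"
definition plus_quat_def: "a + b = qadd a b"
definition minus_quat_def: "a - b = qsub a b"
definition uminus_quat_def: "- a = (case a of Q a1 a2 a3 a4 \<Rightarrow> Q (-a1) (-a2) (-a3) (-a4))"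
definition times_quat_def: "a * b = qmul a b"
instance
proof
  fix a b c :: quat
  show "a + b + c = a + (b + c)" unfolding plus_quat_def by (cases a; cases b; cases c) simp
  show "a + b = b + a" unfolding plus_quat_def by (cases a; cases b) simp
  show "0 + a = a" unfolding plus_quat_def zero_quat_def by (cases a) simp
  show "- a + a = 0" unfolding plus_quat_def zero_quat_def uminus_quat_def by (cases a) simp
  show "a - b = a + - b" unfolding plus_quat_def minus_quat_def uminus_quat_def by (cases a; cases b) simp
  show "a * b * c = a * (b * c)" unfolding times_quat_def by (cases a; cases b; cases c) (simp add: algebra_simps)
  show "1 * a = a" unfolding times_quat_def one_quat_def by (cases a) simp
  show "a * 1 = a" unfolding times_quat_def one_quat_def by (cases a) simp
  show "(a + b) * c = a * c + b * c" unfolding times_quat_def plus_quat_def by (cases a; cases b; cases c) (simp add: algebra_simps)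
  show "a * (b + c) = a * b + a * c" unfolding times_quat_def plus_quat_def by (cases a; cases b; cases c) (simp add: algebra_simps)
  show "(0::quat) \<noteq> 1" unfolding zero_quat_def one_quat_def by simp
qed
end

lemma Q_add: "Q a1 a2 a3 a4 + Q b1 b2 b3 b4 = Q (a1+b1) (a2+b2) (a3+b3) (a4+b4)" by (simp add: plus_quat_def)
lemma Q_diff: "Q a1 a2 a3 a4 - Q b1 b2 b3 b4 = Q (a1-b1) (a2-b2) (a3-b3) (a4-b4)" by (simp add: minus_quat_def)
lemma Q_minus: "- Q a1 a2 a3 a4 = Q (-a1) (-a2) (-a3) (-a4)" by (simp add: uminus_quat_def)
lemma Q_mult: "Q a1 a2 a3 a4 * Q b1 b2 b3 b4 =
     Q (a1*b1 - a2*b2 - a3*b3 - a4*b4)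
       (a1*b2 + a2*b1 + a3*b4 - a4*b3)
       (a1*b3 - a2*b4 + a3*b1 + a4*b2)
       (a1*b4 + a2*b3 - a3*b2 + a4*b1)" by (simp add: times_quat_def)
lemma Q_0: "0 = Q 0 0 0 0" by (simp add: zero_quat_def)
lemma Q_1: "1 = Q 1 0 0 0" by (simp add: one_quat_def)

lemmas Qsimps = Q_add Q_diff Q_minus Q_mult

lemma qcnj_mult: "qcnj (a * b) = qcnj b * qcnj a"
  by (cases a; cases b) (simp add: Q_mult algebra_simps)
lemma qcnj_add: "qcnj (a + b) = qcnj a + qcnj b"
  by (cases a; cases b) (simp add: Q_add)
lemma qcnj_diff: "qcnj (a - b) = qcnj a - qcnj b"
  by (cases a; cases b) (simp add: Q_diff)
lemma qcnj_minus: "qcnj (- a) = - qcnj a"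
  by (cases a) (simp add: Q_minus)
lemma qcnj_qcnj: "qcnj (qcnj a) = a"
  by (cases a) simp

fun qn :: "quat \<Rightarrow> real" where "qn (Q a b c d) = a^2 + b^2 + c^2 + d^2"

lemma qn_nonneg: "qn a \<ge> 0" by (cases a) simp
lemma qn_mult: "qn (a * b) = qn a * qn b"
  by (cases a; cases b) (simp add: Q_mult power2_eq_square algebra_simps)
lemma qn_cnj: "qn (qcnj a) = qn a" by (cases a) simp
lemma mult_qcnj: "a * qcnj a = Q (qn a) 0 0 0"
  by (cases a) (simp add: Q_mult power2_eq_square algebra_simps)
lemma qcnj_mult_self: "qcnj a * a = Q (qn a) 0 0 0"
  by (cases a) (simp add: Q_mult power2_eq_square algebra_simps)

definition "qunit a \<longleftrightarrow> qn a = 1"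

lemma unit_left: "qunit q \<Longrightarrow> qcnj q * (q * x) = x"
  by (simp add: mult.assoc[symmetric] qcnj_mult_self qunit_def Q_1[symmetric])
lemma unit_left2: "qunit q \<Longrightarrow> q * (qcnj q * x) = x"
  by (simp add: mult.assoc[symmetric] mult_qcnj qunit_def Q_1[symmetric])
lemma unit_prod: "qunit q \<Longrightarrow> q * qcnj q = 1"
  by (simp add: mult_qcnj qunit_def Q_1)
lemma unit_prod2: "qunit q \<Longrightarrow> qcnj q * q = 1"
  by (simp add: qcnj_mult_self qunit_def Q_1)
lemma unit_cnj: "qunit q \<Longrightarrow> qunit (qcnj q)"
  by (simp add: qunit_def qn_cnj)

lemma ohead_ojoin: "ohead (ojoin a b) = a"
  by (cases a; cases b) (simp add: ohead_def)
lemma otail_ojoin: "otail (ojoin a b) = b"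
  by (cases a; cases b) (simp add: otail_def)
lemma ojoin_split: "ojoin (ohead w) (otail w) = w"
  by (simp add: ohead_def otail_def oct_eq_iff)

lemma omul_ojoin: "omul (ojoin a b) (ojoin c d) = ojoin (a * c - qcnj d * b) (d * a + b * qcnj c)"
  by (simp add: omul_def ohead_ojoin otail_ojoin times_quat_def plus_quat_def minus_quat_def)

lemma ocnj_ojoin: "ocnj (ojoin a b) = ojoin (qcnj a) (- b)"
  by (cases a; cases b) (simp add: oct_eq_iff ocnj_comp Q_minus)

definition psi :: "quat \<Rightarrow> quat \<Rightarrow> oct \<Rightarrow> oct" where
  "psi q r w = ojoin (q * ohead w * qcnj q) (r * otail w * qcnj q)"

lemma psi_ojoin: "psi q r (ojoin a b) = ojoin (q * a * qcnj q) (r * b * qcnj q)"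
  by (simp add: psi_def ohead_ojoin otail_ojoin)

lemma psi_mult: assumes q: "qunit q" and r: "qunit r"
  shows "psi q r (omul x y) = omul (psi q r x) (psi q r y)"
proof -
  obtain a b where x: "x = ojoin a b" using ojoin_split by metis
  obtain c d where y: "y = ojoin c d" using ojoin_split by metis
  have h: "q * (a * c - qcnj d * b) * qcnj q = q * a * qcnj q * (q * c * qcnj q) - qcnj (r * d * qcnj q) * (r * b * qcnj q)"
    by (simp add: qcnj_mult qcnj_qcnj mult.assoc unit_left[OF q] unit_left[OF r] algebra_simps)
  have t: "r * (d * a + b * qcnj c) * qcnj q = r * d * qcnj q * (q * a * qcnj q) + r * b * qcnj q * qcnj (q * c * qcnj q)"
    by (simp add: qcnj_mult qcnj_qcnj mult.assoc unit_left[OF q] unit_left[OF r] algebra_simps)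
  show ?thesis unfolding x y omul_ojoin psi_ojoin h t ..
qed

lemma psi_cnj: "psi q r (ocnj x) = ocnj (psi q r x)"
proof -
  obtain a b where x: "x = ojoin a b" using ojoin_split by metis
  show ?thesis unfolding x ocnj_ojoin psi_ojoin by (simp add: qcnj_mult qcnj_qcnj mult.assoc)
qed

lemma psi_inv: assumes q: "qunit q" and r: "qunit r"
  shows "psi (qcnj q) (qcnj r) (psi q r x) = x"
proof -
  obtain a b where x: "x = ojoin a b" using ojoin_split by metis
  show ?thesis unfolding x psi_ojoin by (simp add: qcnj_qcnj mult.assoc unit_left[OF q] unit_left[OF r] unit_prod[OF q] unit_prod[OF r] unit_prod2[OF q] unit_prod2[OF r])
qed

lemma ojoin_add: "ojoin a b + ojoin c d = ojoin (a + c) (b + d)"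
  by (cases a; cases b; cases c; cases d) (simp add: oct_eq_iff Q_add)
lemma ojoin_scale: "s *\<^sub>R ojoin a b = ojoin (Q s 0 0 0 * a) (Q s 0 0 0 * b)"
  by (cases a; cases b) (simp add: oct_eq_iff Q_mult)
lemma Qs_comm: "Q s 0 0 0 * a = a * Q s 0 0 0"
  by (cases a) (simp add: Q_mult)

lemma linear_psi: "linear (psi q r)"
proof (rule linearI)
  fix x y :: oct and s :: real
  obtain a b where x: "x = ojoin a b" using ojoin_split by metis
  obtain c d where y: "y = ojoin c d" using ojoin_split by metis
  show "psi q r (x + y) = psi q r x + psi q r y"
    unfolding x y ojoin_add psi_ojoin by (simp add: algebra_simps)
  show "psi q r (s *\<^sub>R x) = s *\<^sub>R psi q r x"
    unfolding x ojoin_scale psi_ojoin by (simp add: mult.assoc[symmetric] Qs_comm) (simp add: mult.assoc Qs_comm)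
qed

definition aut :: "(oct \<Rightarrow> oct) \<Rightarrow> bool" where
  "aut f \<longleftrightarrow> linear f \<and> bij f \<and> (\<forall>a b. f (omul a b) = omul (f a) (f b)) \<and> (\<forall>a. f (ocnj a) = ocnj (f a))"

lemma aut_psi: assumes "qunit q" "qunit r" shows "aut (psi q r)"
  unfolding aut_def
proof (intro conjI allI)
  show "linear (psi q r)" by (rule linear_psi)
  show "bij (psi q r)"
    by (rule o_bij[of "psi (qcnj q) (qcnj r)"])
      (auto simp: fun_eq_iff psi_inv assms unit_cnj[OF assms(1)] unit_cnj[OF assms(2)]
        intro: psi_inv[of "qcnj q" "qcnj r", simplified qcnj_qcnj])
  fix a b show "psi q r (omul a b) = omul (psi q r a) (psi q r b)" by (rule psi_mult[OF assms])
  show "psi q r (ocnj a) = ocnj (psi q r a)" by (rule psi_cnj)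
qed

lemma aut_comp: assumes "aut f" "aut g" shows "aut (f \<circ> g)"
  using assms unfolding aut_def by (auto simp: linear_compose bij_comp)


definition sig :: "oct \<Rightarrow> oct" where
  "sig w = mkoct (w$E1) (w$El) (w$Ei) (- w$Eil) (w$Ekl) (w$Ek) (- w$Ejl) (w$Ej)"

lemma sig_comp: "sig w $ E1 = w$E1" "sig w $ Ei = w$El" "sig w $ Ej = w$Ei" "sig w $ Ek = - w$Eil"
  "sig w $ Ekl = w$Ekl" "sig w $ Ejl = w$Ek" "sig w $ Eil = - w$Ejl" "sig w $ El = w$Ej"
  by (simp_all add: sig_def)

lemma aut_sig: "aut sig"
  unfolding aut_def
proof (intro conjI allI)
  show "linear sig" by (rule linearI) (simp_all add: oct_eq_iff sig_comp)
  have "sig \<circ> (sig \<circ> sig) = id" "(sig \<circ> sig) \<circ> sig = id" by (simp_all add: fun_eq_iff oct_eq_iff sig_comp)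
  thus "bij sig" by (metis o_bij)
  fix a b show "sig (omul a b) = omul (sig a) (sig b)"
    by (simp add: oct_eq_iff sig_comp omul_comp algebra_simps)
  show "sig (ocnj a) = ocnj (sig a)" by (simp add: oct_eq_iff sig_comp ocnj_comp)
qed

lemma aut_linear: "aut f \<Longrightarrow> linear f" by (simp add: aut_def)
lemma aut_mult: "aut f \<Longrightarrow> f (omul a b) = omul (f a) (f b)" by (simp add: aut_def)
lemma aut_cnj: "aut f \<Longrightarrow> f (ocnj a) = ocnj (f a)" by (simp add: aut_def)
lemma aut_inj: "aut f \<Longrightarrow> inj f" by (simp add: aut_def bij_def)
lemma aut_surj: "aut f \<Longrightarrow> surj f" by (simp add: aut_def bij_def)

lemma aut_assoc: "aut f \<Longrightarrow> f (assoc x y z) = assoc (f x) (f y) (f z)"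
  unfolding assoc_def by (simp add: linear_diff[OF aut_linear] aut_mult)

lemma aut_ore: assumes f: "aut f" and w: "ore w = 0" shows "ore (f w) = 0"
proof -
  have "ocnj w = - w" using w by (simp add: oct_eq_iff ocnj_comp ore_def)
  hence "ocnj (f w) = - f w" using aut_cnj[OF f, of w] linear_neg[OF aut_linear[OF f]] by simp
  thus ?thesis by (simp add: oct_eq_iff ocnj_comp ore_def)
qed

definition autT :: "(oct \<Rightarrow> oct) \<Rightarrow> real \<times> real \<times> real \<times> oct \<times> oct \<times> oct \<Rightarrow> real \<times> real \<times> real \<times> oct \<times> oct \<times> oct" where
  "autT f A = (case A of (p,m,n,a,b,c) \<Rightarrow> (p,m,n,f a,f b,f c))"

lemma eigen_transfer: assumes f: "aut f"
  shows "eigen_eq (p,m,n,f a,f b,f c) (f x) (f y) (f z) \<longleftrightarrow> eigen_eq (p,m,n,a,b,c) x y z"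
proof -
  note L = aut_linear[OF f]
  have e1: "p *\<^sub>R f x + omul (f a) (f y) + omul (ocnj (f c)) (f z) = f (p *\<^sub>R x + omul a y + omul (ocnj c) z)"
    by (simp add: linear_add[OF L] linear_scale[OF L] aut_mult[OF f] aut_cnj[OF f])
  have e2: "omul (ocnj (f a)) (f x) + m *\<^sub>R f y + omul (f b) (f z) = f (omul (ocnj a) x + m *\<^sub>R y + omul b z)"
    by (simp add: linear_add[OF L] linear_scale[OF L] aut_mult[OF f] aut_cnj[OF f])
  have e3: "omul (f c) (f x) + omul (ocnj (f b)) (f y) + n *\<^sub>R f z = f (omul c x + omul (ocnj b) y + n *\<^sub>R z)"
    by (simp add: linear_add[OF L] linear_scale[OF L] aut_mult[OF f] aut_cnj[OF f])
  have r: "\<And>w. omul (f w) (assoc (f x) (f y) (f z)) = f (omul w (assoc x y z))"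
    by (simp add: aut_mult[OF f] aut_assoc[OF f])
  show ?thesis unfolding eigen_eq_def Let_def prod.case e1 e2 e3 r inj_eq[OF aut_inj[OF f]] ..
qed

lemma hsol_transfer: assumes f: "aut f"
  shows "hsol (f x) (f y) (f z) = autT f ` hsol x y z"
proof
  show "autT f ` hsol x y z \<subseteq> hsol (f x) (f y) (f z)"
    by (auto simp: hsol_def autT_def eigen_transfer[OF f] split: prod.splits)
next
  show "hsol (f x) (f y) (f z) \<subseteq> autT f ` hsol x y z"
  proof
    fix A assume A: "A \<in> hsol (f x) (f y) (f z)"
    obtain p m n a b c where Ad: "A = (p,m,n,a,b,c)" by (cases A) auto
    obtain a' where a': "a = f a'" using aut_surj[OF f] by (metis surjD)
    obtain b' where b': "b = f b'" using aut_surj[OF f] by (metis surjD)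
    obtain c' where c': "c = f c'" using aut_surj[OF f] by (metis surjD)
    have "(p,m,n,a',b',c') \<in> hsol x y z" using A unfolding Ad a' b' c' hsol_def by (simp add: eigen_transfer[OF f])
    moreover have "A = autT f (p,m,n,a',b',c')" unfolding Ad a' b' c' autT_def by simp
    ultimately show "A \<in> autT f ` hsol x y z" by blast
  qed
qed

lemma linear_autT: assumes f: "aut f" shows "linear (autT f)"
  unfolding linear_iff autT_def
  using linear_add[OF aut_linear[OF f]] linear_scale[OF aut_linear[OF f]]
  by (auto split: prod.splits)

lemma inj_autT: assumes f: "aut f" shows "inj (autT f)"
  using aut_inj[OF f] unfolding inj_def autT_def by (auto split: prod.splits)

lemma transfer_props: assumes f: "aut f"
  shows "hsol (f x) (f y) (f z) \<noteq> {} \<longleftrightarrow> hsol x y z \<noteq> {}"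
    and "aff_dim (hsol (f x) (f y) (f z)) = aff_dim (hsol x y z)"
  unfolding hsol_transfer[OF f] using aff_dim_injective_linear_image[OF linear_autT[OF f] inj_autT[OF f]] by auto


lemma qn_Qs: "qn (Q s 0 0 0) = s^2" by simp

lemma qn_pos: assumes "q \<noteq> 0" shows "qn q > 0"
proof (cases q)
  case (Q a b c d)
  have "a \<noteq> 0 \<or> b \<noteq> 0 \<or> c \<noteq> 0 \<or> d \<noteq> 0" using assms Q by (auto simp: Q_0)
  hence "a^2 > 0 \<or> b^2 > 0 \<or> c^2 > 0 \<or> d^2 > 0" by auto
  moreover have "a^2 \<ge> 0" "b^2 \<ge> 0" "c^2 \<ge> 0" "d^2 \<ge> 0" by auto
  ultimately have "a^2 + b^2 + c^2 + d^2 > 0" by linarith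
  thus ?thesis using Q by simp
qed

lemma qunit_one: "qunit 1" by (simp add: qunit_def Q_1)

lemma normalize_unit: assumes "q0 \<noteq> 0" shows "qunit (Q (1/sqrt (qn q0)) 0 0 0 * q0)"
proof -
  have pos: "qn q0 > 0" using qn_pos[OF assms] .
  show ?thesis unfolding qunit_def qn_mult qn_Qs using pos by (simp add: power_divide)
qed

lemma Qs_mult_Qs: "Q s 0 0 0 * Q t 0 0 0 = Q (s * t) 0 0 0" by (simp add: Q_mult)
lemma qcnj_Qs: "qcnj (Q s 0 0 0) = Q s 0 0 0" by simp

lemma rot_scale: "(Q s 0 0 0 * q0) * u * qcnj (Q s 0 0 0 * q0) = Q (s * s) 0 0 0 * (q0 * u * qcnj q0)"
proof -
  have "(Q s 0 0 0 * q0) * u * qcnj (Q s 0 0 0 * q0) = Q s 0 0 0 * (q0 * u * qcnj q0) * Q s 0 0 0"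
    by (simp add: qcnj_mult qcnj_Qs mult.assoc)
  also have "\<dots> = Q s 0 0 0 * Q s 0 0 0 * (q0 * u * qcnj q0)" by (metis Qs_comm mult.assoc)
  finally show ?thesis by (simp add: Qs_mult_Qs)
qed

lemma rot3: "\<exists>q. qunit q \<and> q * Q 0 u2 u3 u4 * qcnj q = Q 0 (sqrt (u2^2+u3^2+u4^2)) 0 0"
proof -
  define n where "n = sqrt (u2^2+u3^2+u4^2)"
  have nn: "n*n = u2^2+u3^2+u4^2" unfolding n_def by (simp add: add_nonneg_nonneg)
  define q0 where "q0 = Q (n+u2) 0 u4 (-u3)"
  show ?thesis
  proof (cases "q0 = 0")
    case False
    define s where "s = 1/sqrt (qn q0)"
    have pos: "qn q0 > 0" using qn_pos[OF False] .
    have "q0 * Q 0 u2 u3 u4 * qcnj q0 = Q 0 (n * qn q0 - (n+u2)*(n*n - (u2^2+u3^2+u4^2))) (u3*(n*n - (u2^2+u3^2+u4^2))) (u4*(n*n - (u2^2+u3^2+u4^2)))"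
      unfolding q0_def by (simp add: Q_mult algebra_simps power2_eq_square power3_eq_cube)
    hence key: "q0 * Q 0 u2 u3 u4 * qcnj q0 = Q 0 (n * qn q0) 0 0" using nn by simp
    have "(Q s 0 0 0 * q0) * Q 0 u2 u3 u4 * qcnj (Q s 0 0 0 * q0) = Q 0 n 0 0"
      unfolding rot_scale key using pos by (simp add: Q_mult s_def)
    thus ?thesis using normalize_unit[OF False] unfolding n_def s_def by blast
  next
    case True
    hence h: "u3 = 0" "u4 = 0" "u2 = -n" unfolding q0_def Q_0 by auto
    have "Q 0 0 1 0 * Q 0 u2 u3 u4 * qcnj (Q 0 0 1 0) = Q 0 n 0 0" using h by (simp add: Q_mult)
    moreover have "qunit (Q 0 0 1 0)" by (simp add: qunit_def)
    ultimately show ?thesis unfolding n_def by blast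
  qed
qed

lemma rot2: "\<exists>a b. qunit (Q a b 0 0) \<and> Q a b 0 0 * Q 0 0 u3 u4 * qcnj (Q a b 0 0) = Q 0 0 (sqrt (u3^2+u4^2)) 0"
proof -
  define n where "n = sqrt (u3^2+u4^2)"
  have nn: "n*n = u3^2+u4^2" unfolding n_def by (simp add: add_nonneg_nonneg)
  define q0 where "q0 = Q (n+u3) (-u4) 0 0"
  show ?thesis
  proof (cases "q0 = 0")
    case False
    define s where "s = 1/sqrt (qn q0)"
    have pos: "qn q0 > 0" using qn_pos[OF False] .
    have "q0 * Q 0 0 u3 u4 * qcnj q0 = Q 0 0 (n * qn q0 - (n+u3)*(n*n - (u3^2+u4^2))) (u4*(n*n - (u3^2+u4^2)))"
      unfolding q0_def by (simp add: Q_mult algebra_simps power2_eq_square power3_eq_cube)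
    hence key: "q0 * Q 0 0 u3 u4 * qcnj q0 = Q 0 0 (n * qn q0) 0" using nn by simp
    have "(Q s 0 0 0 * q0) * Q 0 0 u3 u4 * qcnj (Q s 0 0 0 * q0) = Q 0 0 n 0"
      unfolding rot_scale key using pos by (simp add: Q_mult s_def)
    moreover have "Q s 0 0 0 * q0 = Q (s * (n+u3)) (s * (-u4)) 0 0" unfolding q0_def by (simp add: Q_mult)
    ultimately show ?thesis using normalize_unit[OF False] unfolding n_def s_def by metis
  next
    case True
    hence h: "u3 = -n" "u4 = 0" unfolding q0_def Q_0 by auto
    have "Q 0 1 0 0 * Q 0 0 u3 u4 * qcnj (Q 0 1 0 0) = Q 0 0 n 0" using h by (simp add: Q_mult)
    moreover have "qunit (Q 0 1 0 0)" by (simp add: qunit_def)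
    ultimately show ?thesis unfolding n_def by blast
  qed
qed

lemma fix_i: assumes u: "qunit (Q a b 0 0)" shows "Q a b 0 0 * Q 0 t 0 0 * qcnj (Q a b 0 0) = Q 0 t 0 0"
proof -
  have h: "a*a+b*b = 1" using u by (simp add: qunit_def power2_eq_square)
  have "a*(a*t) + b*(b*t) = (a*a+b*b)*t" by (simp add: algebra_simps)
  hence e: "a*(a*t) + b*(b*t) = t" using h by simp
  show ?thesis using e by (simp add: Q_mult algebra_simps)
qed

lemma fix_real: assumes u: "qunit q" shows "q * Q t 0 0 0 * qcnj q = Q t 0 0 0"
proof -
  have c: "q * Q t 0 0 0 = Q t 0 0 0 * q" by (rule Qs_comm[symmetric])
  have "q * Q t 0 0 0 * qcnj q = Q t 0 0 0 * (q * qcnj q)" unfolding c by (simp only: mult.assoc)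
  thus ?thesis using unit_prod[OF u] by simp
qed

lemma rtail: assumes q: "qunit q" shows "\<exists>r \<rho>. qunit r \<and> r * t * qcnj q = Q \<rho> 0 0 0"
proof (cases "t = 0")
  case True
  show ?thesis using True qunit_one by (rule_tac x=1 in exI, rule_tac x=0 in exI, simp add: Q_0[symmetric])
next
  case False
  have tq: "qcnj t \<noteq> 0" using False by (cases t) (auto simp: Q_0)
  have nz: "q * qcnj t \<noteq> 0"
  proof
    assume "q * qcnj t = 0"
    hence "qcnj q * (q * qcnj t) = 0" by simp
    thus False using unit_left[OF q] tq by simp
  qed
  define s where "s = 1/sqrt (qn (q * qcnj t))"
  have "Q s 0 0 0 * (q * qcnj t) * t * qcnj q = Q s 0 0 0 * (q * (qcnj t * t) * qcnj q)"
    by (simp add: mult.assoc)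
  also have "\<dots> = Q s 0 0 0 * Q (qn t) 0 0 0" unfolding qcnj_mult_self fix_real[OF q] ..
  finally have eq: "Q s 0 0 0 * (q * qcnj t) * t * qcnj q = Q (s * qn t) 0 0 0" unfolding Qs_mult_Qs .
  have un: "qunit (Q s 0 0 0 * (q * qcnj t))" using normalize_unit[OF nz] unfolding s_def .
  show ?thesis using un eq by blast
qed


definition "ei = ojoin (Q 0 1 0 0) (Q 0 0 0 0)"
definition "ej = ojoin (Q 0 0 1 0) (Q 0 0 0 0)"
definition "el = ojoin (Q 0 0 0 0) (Q 1 0 0 0)"

lemma split_imag: "ore w = 0 \<Longrightarrow> w = ojoin (Q 0 (w$Ei) (w$Ej) (w$Ek)) (otail w)"
  by (simp add: oct_eq_iff ore_def otail_def)

lemma Q0_is_0: "Q 0 0 0 0 = 0" by (simp add: Q_0)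

lemma norm1: assumes "ore x = 0" shows "\<exists>f. aut f \<and> (\<forall>e. e \<noteq> Ei \<longrightarrow> f x $ e = 0)"
proof -
  obtain q where q: "qunit q" and hq: "q * Q 0 (x$Ei) (x$Ej) (x$Ek) * qcnj q = Q 0 (sqrt ((x$Ei)^2+(x$Ej)^2+(x$Ek)^2)) 0 0"
    using rot3 by blast
  define \<alpha> where "\<alpha> = sqrt ((x$Ei)^2+(x$Ej)^2+(x$Ek)^2)"
  obtain r \<beta> where r: "qunit r" and hr: "r * otail x * qcnj q = Q \<beta> 0 0 0" using rtail[OF q] by blast
  have x1: "psi q r x = ojoin (Q 0 \<alpha> 0 0) (Q \<beta> 0 0 0)"
    by (subst split_imag[OF assms]) (simp add: psi_ojoin hq hr \<alpha>_def)
  have x2: "sig (ojoin (Q 0 \<alpha> 0 0) (Q \<beta> 0 0 0)) = ojoin (Q 0 \<beta> \<alpha> 0) (Q 0 0 0 0)"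
    by (simp add: oct_eq_iff sig_comp)
  obtain q' where q': "qunit q'" and hq': "q' * Q 0 \<beta> \<alpha> 0 * qcnj q' = Q 0 (sqrt (\<beta>^2+\<alpha>^2+0^2)) 0 0"
    using rot3 by blast
  have x3: "psi q' 1 (ojoin (Q 0 \<beta> \<alpha> 0) (Q 0 0 0 0)) = ojoin (Q 0 (sqrt (\<beta>^2+\<alpha>^2+0^2)) 0 0) (Q 0 0 0 0)"
    by (simp add: psi_ojoin hq' Q0_is_0)
  define f where "f = psi q' 1 \<circ> sig \<circ> psi q r"
  have "aut f" unfolding f_def by (intro aut_comp aut_psi aut_sig q q' r qunit_one)
  moreover have "f x = ojoin (Q 0 (sqrt (\<beta>^2+\<alpha>^2+0^2)) 0 0) (Q 0 0 0 0)" unfolding f_def by (simp only: comp_apply x1 x2 x3)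
  ultimately show ?thesis by (intro exI[of _ f]) (auto simp: all_ob)
qed

lemma norm2: assumes "ore y = 0" shows "\<exists>f. aut f \<and> f ei = ei \<and> (\<forall>e. e \<notin> {Ei, Ej} \<longrightarrow> f y $ e = 0)"
proof -
  obtain a b where q: "qunit (Q a b 0 0)" and hq0: "Q a b 0 0 * Q 0 0 (y$Ej) (y$Ek) * qcnj (Q a b 0 0) = Q 0 0 (sqrt ((y$Ej)^2+(y$Ek)^2)) 0"
    using rot2 by blast
  define s where "s = sqrt ((y$Ej)^2+(y$Ek)^2)"
  have split: "Q 0 (y$Ei) (y$Ej) (y$Ek) = Q 0 (y$Ei) 0 0 + Q 0 0 (y$Ej) (y$Ek)" by (simp add: Q_add)
  have "Q a b 0 0 * Q 0 (y$Ei) (y$Ej) (y$Ek) * qcnj (Q a b 0 0) =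
     Q a b 0 0 * Q 0 (y$Ei) 0 0 * qcnj (Q a b 0 0) + Q a b 0 0 * Q 0 0 (y$Ej) (y$Ek) * qcnj (Q a b 0 0)"
    unfolding split by (simp only: distrib_left distrib_right)
  also have "\<dots> = Q 0 (y$Ei) 0 0 + Q 0 0 s 0" by (simp only: fix_i[OF q] hq0 s_def)
  also have "\<dots> = Q 0 (y$Ei) s 0" by (simp add: Q_add)
  finally have hq: "Q a b 0 0 * Q 0 (y$Ei) (y$Ej) (y$Ek) * qcnj (Q a b 0 0) = Q 0 (y$Ei) s 0" .
  obtain r \<tau> where r: "qunit r" and hr: "r * otail y * qcnj (Q a b 0 0) = Q \<tau> 0 0 0" using rtail[OF q] by blast
  have y1: "psi (Q a b 0 0) r y = ojoin (Q 0 (y$Ei) s 0) (Q \<tau> 0 0 0)"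
    by (subst split_imag[OF assms]) (simp only: psi_ojoin hq hr)
  have e1: "psi (Q a b 0 0) r ei = ei" unfolding ei_def by (simp only: psi_ojoin fix_i[OF q] Q0_is_0 mult_zero_right mult_zero_left)
  have y2: "sig (sig (ojoin (Q 0 (y$Ei) s 0) (Q \<tau> 0 0 0))) = ojoin (Q 0 s \<tau> 0) (Q (y$Ei) 0 0 0)"
    by (simp add: oct_eq_iff sig_comp)
  have e2: "sig (sig ei) = el" unfolding ei_def el_def by (simp add: oct_eq_iff sig_comp)
  obtain q' where q': "qunit q'" and hq': "q' * Q 0 s \<tau> 0 * qcnj q' = Q 0 (sqrt (s^2+\<tau>^2+0^2)) 0 0"
    using rot3 by blast
  have y3: "psi q' q' (ojoin (Q 0 s \<tau> 0) (Q (y$Ei) 0 0 0)) = ojoin (Q 0 (sqrt (s^2+\<tau>^2+0^2)) 0 0) (Q (y$Ei) 0 0 0)"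
    by (simp only: psi_ojoin hq' fix_real[OF q'])
  have e3: "psi q' q' el = el" unfolding el_def by (simp add: psi_ojoin fix_real[OF q'] Q0_is_0)
  have y4: "sig (ojoin (Q 0 (sqrt (s^2+\<tau>^2+0^2)) 0 0) (Q (y$Ei) 0 0 0)) = ojoin (Q 0 (y$Ei) (sqrt (s^2+\<tau>^2+0^2)) 0) (Q 0 0 0 0)"
    by (simp add: oct_eq_iff sig_comp)
  have e4: "sig el = ei" unfolding ei_def el_def by (simp add: oct_eq_iff sig_comp)
  define f where "f = sig \<circ> psi q' q' \<circ> sig \<circ> sig \<circ> psi (Q a b 0 0) r"
  have "aut f" unfolding f_def by (intro aut_comp aut_psi aut_sig q q' r)
  moreover have "f ei = ei" unfolding f_def using e1 e2 e3 e4 by simp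
  moreover have "f y = ojoin (Q 0 (y$Ei) (sqrt (s^2+\<tau>^2+0^2)) 0) (Q 0 0 0 0)" unfolding f_def by (simp only: comp_apply y1 y2 y3 y4)
  ultimately show ?thesis by (intro exI[of _ f]) (auto simp: all_ob)
qed

lemma norm3: assumes "ore z = 0" shows "\<exists>f. aut f \<and> f ei = ei \<and> f ej = ej \<and> (\<forall>e. e \<notin> {Ei, Ej, Ek, El} \<longrightarrow> f z $ e = 0)"
proof -
  obtain r \<tau> where r: "qunit r" and hr: "r * otail z * qcnj 1 = Q \<tau> 0 0 0" using rtail[OF qunit_one] by blast
  have c1: "qcnj 1 = 1" by (simp add: Q_1)
  have hr': "r * otail z = Q \<tau> 0 0 0" using hr c1 by simp
  define f where "f = psi 1 r"
  have "aut f" unfolding f_def by (intro aut_psi r qunit_one)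
  moreover have "f ei = ei" "f ej = ej" unfolding f_def ei_def ej_def by (simp_all add: psi_ojoin c1 Q0_is_0)
  moreover have "f z = ojoin (Q 0 (z$Ei) (z$Ej) (z$Ek)) (Q \<tau> 0 0 0)"
    unfolding f_def by (subst split_imag[OF assms]) (simp only: psi_ojoin c1 mult_1_left mult_1_right hr')
  ultimately show ?thesis by (intro exI[of _ f]) (auto simp: all_ob)
qed

lemma P1_repr: "(\<forall>e. e \<noteq> Ei \<longrightarrow> w $ e = 0) \<Longrightarrow> w = (w$Ei) *\<^sub>R ei"
  by (simp add: oct_eq_iff ei_def)
lemma P2_repr: "(\<forall>e. e \<notin> {Ei, Ej} \<longrightarrow> w $ e = 0) \<Longrightarrow> w = (w$Ei) *\<^sub>R ei + (w$Ej) *\<^sub>R ej"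
  by (simp add: oct_eq_iff ei_def ej_def)

lemma normal_form: assumes "ore x = 0" "ore y = 0" "ore z = 0"
  shows "\<exists>f. aut f \<and> genf (f x) (f y) (f z)"
proof -
  obtain f1 where f1: "aut f1" and p1: "\<forall>e. e \<noteq> Ei \<longrightarrow> f1 x $ e = 0" using norm1[OF assms(1)] by blast
  obtain f2 where f2: "aut f2" "f2 ei = ei" and p2: "\<forall>e. e \<notin> {Ei, Ej} \<longrightarrow> f2 (f1 y) $ e = 0"
    using norm2[OF aut_ore[OF f1 assms(2)]] by blast
  obtain f3 where f3: "aut f3" "f3 ei = ei" "f3 ej = ej" and p3: "\<forall>e. e \<notin> {Ei, Ej, Ek, El} \<longrightarrow> f3 (f2 (f1 z)) $ e = 0"
    using norm3[OF aut_ore[OF f2(1) aut_ore[OF f1 assms(3)]]] by blast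
  define f where "f = f3 \<circ> f2 \<circ> f1"
  have af: "aut f" unfolding f_def by (intro aut_comp f1 f2 f3)
  define c where "c = f1 x $ Ei"
  have hx1: "f1 x = c *\<^sub>R ei" using P1_repr[OF p1] unfolding c_def .
  have "f x = c *\<^sub>R ei" unfolding f_def comp_apply hx1 linear_scale[OF aut_linear[OF f2(1)]] f2(2)
    linear_scale[OF aut_linear[OF f3(1)]] f3(2) ..
  hence px: "\<forall>e. e \<noteq> Ei \<longrightarrow> f x $ e = 0" by (simp add: ei_def all_ob)
  define c1 where "c1 = f2 (f1 y) $ Ei"
  define c2 where "c2 = f2 (f1 y) $ Ej"
  have hy1: "f2 (f1 y) = c1 *\<^sub>R ei + c2 *\<^sub>R ej" using P2_repr[OF p2] unfolding c1_def c2_def .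
  have "f y = c1 *\<^sub>R ei + c2 *\<^sub>R ej" unfolding f_def comp_apply hy1 linear_add[OF aut_linear[OF f3(1)]]
    linear_scale[OF aut_linear[OF f3(1)]] f3(2) f3(3) ..
  hence py: "\<forall>e. e \<notin> {Ei, Ej} \<longrightarrow> f y $ e = 0" by (simp add: ei_def ej_def all_ob)
  have pz: "\<forall>e. e \<notin> {Ei, Ej, Ek, El} \<longrightarrow> f z $ e = 0" using p3 unfolding f_def by simp
  have "genf (f x) (f y) (f z)" unfolding genf_def using px py pz by (intro conjI)
  thus ?thesis using af by blast
qed

theorem theorem2:
  fixes x y z :: oct
  assumes "ore x = 0" and "ore y = 0" and "ore z = 0"
    and "assoc x y z \<noteq> 0"
  shows "hsol x y z \<noteq> {} \<and> affine (hsol x y z) \<and> aff_dim (hsol x y z) = 6 \<and>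
    ((\<forall>e. e \<noteq> Ei \<longrightarrow> x $ e = 0) \<and>
     (\<forall>e. e \<notin> {Ei, Ej} \<longrightarrow> y $ e = 0) \<and>
     (\<forall>e. e \<notin> {Ei, Ej, Ek, El} \<longrightarrow> z $ e = 0) \<longrightarrow>
     (\<forall>p m n b1 b4 b7. \<exists>!A. A \<in> hsol x y z \<and>
        (case A of (p', m', n', a, b, c) \<Rightarrow>
          p' = p \<and> m' = m \<and> n' = n \<and> b $ E1 = b1 \<and> b $ Ek = b4 \<and> b $ Eil = b7)))"
proof -
  obtain f where f: "aut f" and g: "genf (f x) (f y) (f z)" using normal_form[OF assms(1-3)] by blast
  have "assoc (f x) (f y) (f z) \<noteq> 0"
  proof
    assume "assoc (f x) (f y) (f z) = 0"
    hence "f (assoc x y z) = f 0" using aut_assoc[OF f] linear_0[OF aut_linear[OF f]] by simp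
    hence "assoc x y z = 0" using aut_inj[OF f] by (meson injD)
    thus False using assms(4) by simp
  qed
  note D = gen_dim[OF g this]
  have h1: "hsol x y z \<noteq> {}" using conjunct1[OF D] transfer_props(1)[OF f] by simp
  have h1b: "aff_dim (hsol x y z) = 6" using conjunct2[OF D] transfer_props(2)[OF f] by simp
  have h2: "(\<forall>e. e \<noteq> Ei \<longrightarrow> x $ e = 0) \<and>
     (\<forall>e. e \<notin> {Ei, Ej} \<longrightarrow> y $ e = 0) \<and>
     (\<forall>e. e \<notin> {Ei, Ej, Ek, El} \<longrightarrow> z $ e = 0) \<longrightarrow>
     (\<forall>p m n b1 b4 b7. \<exists>!A. A \<in> hsol x y z \<and>
        (case A of (p', m', n', a, b, c) \<Rightarrow>
          p' = p \<and> m' = m \<and> n' = n \<and> b $ E1 = b1 \<and> b $ Ek = b4 \<and> b $ Eil = b7))"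
  proof (intro impI allI)
    fix p m n b1 b4 b7
    assume H: "(\<forall>e. e \<noteq> Ei \<longrightarrow> x $ e = 0) \<and>
     (\<forall>e. e \<notin> {Ei, Ej} \<longrightarrow> y $ e = 0) \<and>
     (\<forall>e. e \<notin> {Ei, Ej, Ek, El} \<longrightarrow> z $ e = 0)"
    have "genf x y z" using H unfolding genf_def .
    thus "\<exists>!A. A \<in> hsol x y z \<and>
        (case A of (p', m', n', a, b, c) \<Rightarrow>
          p' = p \<and> m' = m \<and> n' = n \<and> b $ E1 = b1 \<and> b $ Ek = b4 \<and> b $ Eil = b7)"
      by (rule gen_ex1[OF _ assms(4)])
  qed
  show ?thesis using h1 h1b h2 affine_hsol by (intro conjI)
qed


end
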